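(* Let $k\ge 2$ be an integer and $\epsilon>0$. Suppose $h=h(X)$ satisfies $1\le h\le (\log X)^{k\log k-k+1-\epsilon}$. Then for every $\eta>0$, for all sufficiently large $X$, the number of integers $x\in[X,2X]$ with $$\sum_{x<n\le x+h}d_k(n)>\eta\, h(\log x)^{k-1}$$ is at most $\eta X$; that is, $\sum_{x<n\le x+h}d_k(n)=o(h(\log x)^{k-1})$ for all but $o(X)$ integers $x\in[X,2X]$.
   Context: For an integer $k\ge1$, $d_k(n)=\#\{(n_1,\dots,n_k)\in\mathbb N^k: n_1n_2\cdots n_k=n\}$ is the $k$-fold divisor function. *)

theory Defs
  imports Complex_Main
begin

definition divisor_k :: "nat \<Rightarrow> nat \<Rightarrow> nat" where
  "divisor_k k n = card {xs :: nat list. length xs = k \<and> (\<forall>a\<in>set xs. 0 < a) \<and> prod_list xs = n}"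

end

theory Submission
  imports Defs "HOL-Computational_Algebra.Primes" "HOL-Library.FuncSet" "HOL-Real_Asymp.Real_Asymp"
begin

definition cnt :: "nat \<Rightarrow> nat \<Rightarrow> nat" where
  "cnt k j = card {ys::nat list. length ys = k \<and> sum_list ys = j}"

lemma finite_cnt_set: "finite {ys::nat list. length ys = k \<and> sum_list ys = j}"
proof (rule finite_subset[OF _ finite_lists_length_eq[of "{0..j}" k]])
  show "{ys::nat list. length ys = k \<and> sum_list ys = j} \<subseteq> {xs. set xs \<subseteq> {0..j} \<and> length xs = k}"
    using member_le_sum_list by fastforce
qed simp

lemma cnt_Suc: "cnt (Suc k) j = (\<Sum>a\<le>j. cnt k (j - a))"
proof -
  have eq: "{ys::nat list. length ys = Suc k \<and> sum_list ys = j} =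
     (\<Union>a\<in>{..j}. (\<lambda>ys. a # ys) ` {ys. length ys = k \<and> sum_list ys = j - a})"
  proof (intro equalityI subsetI)
    fix ys assume "ys \<in> {ys::nat list. length ys = Suc k \<and> sum_list ys = j}"
    then obtain a zs where "ys = a # zs" "length zs = k" "a + sum_list zs = j"
      by (cases ys) auto
    thus "ys \<in> (\<Union>a\<in>{..j}. (\<lambda>ys. a # ys) ` {ys. length ys = k \<and> sum_list ys = j - a})"
      by force
  qed auto
  have "cnt (Suc k) j = (\<Sum>a\<le>j. card ((\<lambda>ys. a # ys) ` {ys. length ys = k \<and> sum_list ys = j - a}))"
    unfolding cnt_def eq
    by (rule card_UN_disjoint) (auto intro: finite_cnt_set)
  also have "\<dots> = (\<Sum>a\<le>j. cnt k (j - a))"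
    unfolding cnt_def by (intro sum.cong refl card_image) (auto simp: inj_on_def)
  finally show ?thesis .
qed

lemma cnt_0_left: "cnt 0 j = (if j = 0 then 1 else 0)"
proof -
  have "{ys::nat list. length ys = 0 \<and> sum_list ys = j} = (if j = 0 then {[]} else {})" by auto
  thus ?thesis by (simp add: cnt_def)
qed

lemma cnt_zero: "cnt k 0 = 1"
  by (induction k) (auto simp: cnt_Suc cnt_0_left)

lemma cnt_one: "cnt k 1 = k"
proof (induction k)
  case 0 thus ?case by (simp add: cnt_0_left)
next
  case (Suc k)
  have "{..1::nat} = {0,1}" by auto
  thus ?case using Suc by (simp add: cnt_Suc cnt_zero)
qed

lemma cnt_pos: "k \<ge> 1 \<Longrightarrow> cnt k j \<ge> 1"
proof (cases k)
  case (Suc k')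
  have "cnt k' (j - j) \<le> (\<Sum>a\<le>j. cnt k' (j - a))"
    by (rule member_le_sum) auto
  thus ?thesis using Suc by (simp add: cnt_Suc cnt_zero)
qed auto

lemma cnt_le: "cnt k j \<le> (j + 1) ^ k"
proof (induction k arbitrary: j)
  case 0 thus ?case by (simp add: cnt_0_left)
next
  case (Suc k)
  have "cnt (Suc k) j = (\<Sum>a\<le>j. cnt k (j - a))" by (rule cnt_Suc)
  also have "\<dots> \<le> (\<Sum>a\<le>j. (j + 1) ^ k)"
  proof (intro sum_mono)
    fix a assume "a \<in> {..j}"
    have "cnt k (j - a) \<le> (j - a + 1) ^ k" by (rule Suc)
    also have "\<dots> \<le> (j + 1) ^ k" by (intro power_mono) auto
    finally show "cnt k (j - a) \<le> (j + 1) ^ k" .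
  qed
  also have "\<dots> = (j + 1) ^ Suc k" by simp
  finally show ?case .
qed

lemma multiplicity_prod_list:
  fixes p :: nat
  assumes "prime p" "\<forall>a\<in>set xs. 0 < a"
  shows "sum_list (map (multiplicity p) xs) = multiplicity p (prod_list xs)"
  using assms(2)
proof (induction xs)
  case Nil thus ?case by simp
next
  case (Cons x xs)
  have "prod_list xs \<noteq> 0" using Cons.prems by (auto simp: prod_list_zero_iff)
  moreover have "x \<noteq> 0" using Cons.prems by auto
  ultimately show ?case using Cons assms(1)
    by (simp add: prime_elem_multiplicity_mult_distrib)
qed

lemma divisor_k_le:
  fixes n :: nat
  assumes "n > 0"
  shows "divisor_k k n \<le> (\<Prod>p\<in>prime_factors n. cnt k (multiplicity p n))"
proof -
  define S where "S = {xs :: nat list. length xs = k \<and> (\<forall>a\<in>set xs. 0 < a) \<and> prod_list xs = n}"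
  define T where "T = (\<Pi>\<^sub>E p \<in> prime_factors n. {ys::nat list. length ys = k \<and> sum_list ys = multiplicity p n})"
  define f where "f = (\<lambda>xs. restrict (\<lambda>p. map (multiplicity p) xs) (prime_factors n))"
  have sub: "f ` S \<subseteq> T"
  proof
    fix y assume "y \<in> f ` S"
    then obtain xs where xs: "xs \<in> S" "y = f xs" by auto
    show "y \<in> T" unfolding T_def xs(2) f_def
      using xs(1) multiplicity_prod_list[of _ xs] by (auto simp: S_def)
  qed
  have inj: "inj_on f S"
  proof (rule inj_onI)
    fix xs ys assume xs: "xs \<in> S" and ys: "ys \<in> S" and eq: "f xs = f ys"
    show "xs = ys"
    proof (rule nth_equalityI)
      show "length xs = length ys" using xs ys by (simp add: S_def)
      fix i assume i: "i < length xs"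
      have ix: "xs ! i \<in> set xs" using i by simp
      have iy: "ys ! i \<in> set ys" using i xs ys by (simp add: S_def)
      have px: "xs ! i > 0" "xs ! i dvd n" using xs ix prod_list_dvd[OF ix] by (auto simp: S_def)
      have py: "ys ! i > 0" "ys ! i dvd n" using ys iy prod_list_dvd[OF iy] by (auto simp: S_def)
      show "xs ! i = ys ! i"
      proof (rule multiplicity_eq_nat[OF px(1) py(1)])
        fix p :: nat assume p: "prime p"
        show "multiplicity p (xs ! i) = multiplicity p (ys ! i)"
        proof (cases "p \<in> prime_factors n")
          case True
          have "f xs p = f ys p" using eq by simp
          hence "map (multiplicity p) xs = map (multiplicity p) ys" using True by (simp add: f_def)
          hence "map (multiplicity p) xs ! i = map (multiplicity p) ys ! i" by simp
          thus ?thesis using i \<open>length xs = length ys\<close> by simp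
        next
          case False
          hence "\<not> p dvd n" using p assms by (auto simp: in_prime_factors_iff)
          hence "\<not> p dvd xs ! i" "\<not> p dvd ys ! i" using px py dvd_trans by blast+
          thus ?thesis by (simp add: not_dvd_imp_multiplicity_0)
        qed
      qed
    qed
  qed
  have finT: "finite T" unfolding T_def by (intro finite_PiE) (auto intro: finite_cnt_set)
  have "card S \<le> card T" using card_inj_on_le[OF inj sub finT] .
  also have "card T = (\<Prod>p\<in>prime_factors n. cnt k (multiplicity p n))"
    unfolding T_def cnt_def by (simp add: card_PiE)
  finally show ?thesis by (simp add: divisor_k_def S_def)
qed


definition F :: "(nat \<Rightarrow> real) \<Rightarrow> nat \<Rightarrow> real" where
  "F w n = (\<Prod>p\<in>prime_factors n. w (multiplicity p n))"

lemma F_mult: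
  fixes p m j :: nat
  assumes p: "prime p" and nd: "\<not> p dvd m" and m: "m > 0" and j: "j \<ge> 1"
  shows "F w (p ^ j * m) = w j * F w m"
proof -
  have pf: "prime_factors (p ^ j * m) = insert p (prime_factors m)"
  proof -
    have "prime_factors (p ^ j) = {p}" using p j by (simp add: prime_factorization_prime_power)
    thus ?thesis using p m j by (simp add: prime_factors_product)
  qed
  have pn: "p \<notin> prime_factors m" using nd by (auto simp: in_prime_factors_iff)
  have mp: "multiplicity p (p ^ j * m) = j"
    using p m nd by (simp add: prime_elem_multiplicity_mult_distrib not_dvd_imp_multiplicity_0)
  have mq: "multiplicity q (p ^ j * m) = multiplicity q m" if "q \<in> prime_factors m" for q
  proof -
    have q: "prime q" "q \<noteq> p" using that pn by (auto simp: in_prime_factors_iff)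
    have "multiplicity q (p ^ j) = 0"
      using q p by (simp add: prime_elem_multiplicity_power_distrib prime_multiplicity_other)
    thus ?thesis using q p m by (simp add: prime_elem_multiplicity_mult_distrib)
  qed
  have "F w (p ^ j * m) = w (multiplicity p (p ^ j * m)) * (\<Prod>q\<in>prime_factors m. w (multiplicity q (p ^ j * m)))"
    unfolding F_def pf using pn by (simp add: prod.insert)
  also have "\<dots> = w j * F w m" unfolding F_def mp by (simp add: mq)
  finally show ?thesis .
qed

lemma F_expand:
  fixes m :: nat
  assumes "finite P" "prime_factors m \<subseteq> P" "m > 0" "w 0 = 1" "\<forall>p\<in>P. prime p"
  shows "F w m = (\<Prod>p\<in>P. w (multiplicity p m))"
  unfolding F_def
proof (rule prod.mono_neutral_left[OF assms(1) assms(2)])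
  show "\<forall>i\<in>P - prime_factors m. w (multiplicity i m) = 1"
    using assms(3,4,5) by (auto simp: prime_factors_multiplicity)
qed

lemma num_expand:
  fixes m :: nat
  assumes "finite P" "prime_factors m \<subseteq> P" "m > 0" "\<forall>p\<in>P. prime p"
  shows "m = (\<Prod>p\<in>P. p ^ (multiplicity p m))"
proof -
  have "m = (\<Prod>p\<in>prime_factors m. p ^ multiplicity p m)" using prime_factorization_nat[OF assms(3)] .
  also have "\<dots> = (\<Prod>p\<in>P. p ^ (multiplicity p m))"
    by (rule prod.mono_neutral_left[OF assms(1) assms(2)])
       (use assms(3,4) in \<open>auto simp: prime_factors_multiplicity\<close>)
  finally show ?thesis .
qed

lemma multiplicity_le_self:
  fixes p m :: nat
  assumes "prime p" "m > 0"
  shows "multiplicity p m \<le> m"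
proof -
  have "multiplicity p m < 2 ^ multiplicity p m" by (rule less_exp)
  also have "\<dots> \<le> p ^ multiplicity p m" using assms by (intro power_mono) (auto simp: prime_ge_2_nat)
  also have "\<dots> \<le> m" using assms by (intro dvd_imp_le multiplicity_dvd) auto
  finally show ?thesis by simp
qed

lemma euler_bound:
  fixes N :: nat and w :: "nat \<Rightarrow> real"
  assumes w0: "w 0 = 1" and wnn: "\<And>j. w j \<ge> 0"
  shows "(\<Sum>m\<in>{1..N}. F w m / m) \<le> (\<Prod>p\<in>{p. prime p \<and> p \<le> N}. \<Sum>j\<le>N. w j / real p ^ j)"
proof -
  define P where "P = {p. prime p \<and> p \<le> N}"
  have finP: "finite P" unfolding P_def by simp
  define g where "g = (\<lambda>m. restrict (\<lambda>p. multiplicity p m) P)"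
  define G where "G = (\<lambda>e. \<Prod>p\<in>P. w (e p) / real p ^ (e p))"
  have pfsub: "prime_factors m \<subseteq> P" if "m \<in> {1..N}" for m
  proof
    fix x assume "x \<in> prime_factors m"
    hence "prime x" "x dvd m" by (auto simp: in_prime_factors_iff)
    moreover have "m > 0" using that by auto
    ultimately have "x \<le> m" by (intro dvd_imp_le) auto
    thus "x \<in> P" using that \<open>prime x\<close> by (auto simp: P_def)
  qed
  have eq: "F w m / m = G (g m)" if "m \<in> {1..N}" for m
  proof -
    have m: "m > 0" using that by auto
    have "F w m = (\<Prod>p\<in>P. w (multiplicity p m))" using F_expand[where w=w, OF finP pfsub[OF that] m w0] by (simp add: P_def)
    moreover have "real m = (\<Prod>p\<in>P. real p ^ (multiplicity p m))"
    proof -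
      have "real m = real (\<Prod>p\<in>P. p ^ (multiplicity p m))"
        using arg_cong[OF num_expand[OF finP pfsub[OF that] m], of real] P_def by simp
      thus ?thesis by simp
    qed
    ultimately have "F w m / m = (\<Prod>p\<in>P. w (multiplicity p m) / real p ^ (multiplicity p m))"
      by (simp add: prod_dividef)
    thus ?thesis by (simp add: G_def g_def)
  qed
  have inj: "inj_on g {1..N}"
  proof (rule inj_onI)
    fix x y assume x: "x \<in> {1..N}" and y: "y \<in> {1..N}" and e: "g x = g y"
    show "x = y"
    proof (rule multiplicity_eq_nat)
      show "x > 0" "y > 0" using x y by auto
      fix p :: nat assume p: "prime p"
      show "multiplicity p x = multiplicity p y"
      proof (cases "p \<in> P")
        case True thus ?thesis using fun_cong[OF e, of p] by (simp add: g_def)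
      next
        case False
        hence "p \<notin> prime_factors x" "p \<notin> prime_factors y" using pfsub x y by auto
        thus ?thesis using x y p by (auto simp: prime_factors_multiplicity)
      qed
    qed
  qed
  have sub: "g ` {1..N} \<subseteq> PiE P (\<lambda>_. {..N})"
  proof
    fix e assume "e \<in> g ` {1..N}"
    then obtain m where m: "m \<in> {1..N}" "e = g m" by auto
    have "multiplicity p m \<le> N" if "p \<in> P" for p
    proof -
      have "multiplicity p m \<le> m" using that m by (intro multiplicity_le_self) (auto simp: P_def)
      thus ?thesis using m by auto
    qed
    thus "e \<in> PiE P (\<lambda>_. {..N})" using m by (auto simp: g_def)
  qed
  have "(\<Sum>m\<in>{1..N}. F w m / m) = (\<Sum>m\<in>{1..N}. G (g m))" by (intro sum.cong) (auto simp: eq)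
  also have "\<dots> = (\<Sum>e\<in>g ` {1..N}. G e)" using sum.reindex[OF inj, of G] by simp
  also have "\<dots> \<le> (\<Sum>e\<in>PiE P (\<lambda>_. {..N}). G e)"
  proof (rule sum_mono2[OF _ sub])
    show "finite (PiE P (\<lambda>_. {..N}))" using finP by (intro finite_PiE) auto
    fix e assume "e \<in> PiE P (\<lambda>_. {..N}) - g ` {1..N}"
    show "0 \<le> G e" unfolding G_def by (intro prod_nonneg divide_nonneg_nonneg wnn) auto
  qed
  also have "\<dots> = (\<Prod>p\<in>P. \<Sum>j\<le>N. w j / real p ^ j)"
    unfolding G_def by (rule prod_sum_PiE[symmetric]) (auto simp: finP)
  finally show ?thesis by (simp add: P_def)
qed


definition PS :: "nat \<Rightarrow> nat set" where "PS n = {p. prime p \<and> p \<le> n}"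

lemma finite_PS [simp]: "finite (PS n)" by (simp add: PS_def)

lemma prod_primes_dvd:
  fixes S :: "nat set"
  assumes "finite S" "\<forall>p\<in>S. prime p" "\<forall>p\<in>S. p dvd n"
  shows "(\<Prod>S) dvd n"
  using assms
proof (induction S rule: finite_induct)
  case empty thus ?case by simp
next
  case (insert p S)
  have "\<not> p dvd \<Prod>S"
  proof
    assume "p dvd \<Prod>S"
    then obtain q where "q \<in> S" "p dvd q" using insert by (auto simp: prime_dvd_prod_iff)
    hence "p = q" using insert by (auto simp: primes_dvd_imp_eq)
    thus False using \<open>q \<in> S\<close> insert by auto
  qed
  hence "coprime p (\<Prod>S)" using insert by (auto intro: prime_imp_coprime)
  thus ?case using insert by (auto intro: divides_mult)
qed

lemma primes_binomial_dvd:
  "(\<Prod>{p. prime p \<and> m < p \<and> p \<le> 2 * m}) dvd ((2 * m) choose m)"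
proof (rule prod_primes_dvd)
  show "\<forall>p\<in>{p. prime p \<and> m < p \<and> p \<le> 2 * m}. p dvd (2 * m choose m)"
  proof
    fix p assume p: "p \<in> {p. prime p \<and> m < p \<and> p \<le> 2 * m}"
    hence pr: "prime p" by auto
    have "fact m * fact (2 * m - m) * (2 * m choose m) = (fact (2 * m) :: nat)"
      by (rule binomial_fact_lemma) auto
    hence eq: "(2 * m choose m) * (fact m * fact m) = (fact (2 * m) :: nat)" by (simp add: algebra_simps)
    have "p dvd (fact (2 * m) :: nat)" using p by (simp add: prime_dvd_fact_iff)
    hence "p dvd (2 * m choose m) * (fact m * fact m)" by (simp add: eq)
    moreover have "\<not> p dvd (fact m :: nat)" using p by (simp add: prime_dvd_fact_iff)
    ultimately show "p dvd (2 * m choose m)" using pr by (simp add: prime_dvd_mult_iff)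
  qed
qed auto

definition theta :: "nat \<Rightarrow> real" where "theta n = (\<Sum>p\<in>PS n. ln (real p))"

lemma ln_PS_nonneg: "p \<in> PS n \<Longrightarrow> ln (real p) \<ge> 0"
proof -
  assume "p \<in> PS n"
  hence "prime p" by (simp add: PS_def)
  hence "p \<ge> 1" using prime_gt_1_nat[of p] by linarith
  hence "real p \<ge> 1" by simp
  thus ?thesis by simp
qed

lemma theta_nonneg: "theta n \<ge> 0"
  unfolding theta_def by (intro sum_nonneg ln_PS_nonneg)

lemma theta_mono: "m \<le> n \<Longrightarrow> theta m \<le> theta n"
  unfolding theta_def by (intro sum_mono2 ln_PS_nonneg) (auto simp: PS_def)

lemma theta_double: "theta (2 * m) \<le> theta m + real m * ln 4"
proof -
  define Q where "Q = {p. prime p \<and> m < p \<and> p \<le> 2 * m}"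
  have split: "PS (2 * m) = PS m \<union> Q" "PS m \<inter> Q = {}" by (auto simp: PS_def Q_def)
  have finQ: "finite Q" by (simp add: Q_def)
  have "theta (2 * m) = theta m + (\<Sum>p\<in>Q. ln (real p))"
    unfolding theta_def split(1) by (rule sum.union_disjoint) (use split finQ in auto)
  also have "(\<Sum>p\<in>Q. ln (real p)) = ln (real (\<Prod>Q))"
  proof -
    have "real (\<Prod>Q) = (\<Prod>p\<in>Q. real p)" by (simp add: of_nat_prod)
    moreover have "ln (\<Prod>p\<in>Q. real p) = (\<Sum>p\<in>Q. ln (real p))"
      by (rule ln_prod) (auto simp: finQ Q_def prime_gt_0_nat)
    ultimately show ?thesis by simp
  qed
  also have "\<dots> \<le> ln (real ((2 * m) choose m))"
  proof -
    have "\<Prod>Q \<le> (2 * m) choose m"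
      using primes_binomial_dvd[of m] by (intro dvd_imp_le) (auto simp: Q_def)
    moreover have "\<Prod>Q > 0" using finQ by (auto simp: Q_def prime_gt_0_nat)
    ultimately have "real (\<Prod>Q) \<le> real ((2 * m) choose m)" "0 < real (\<Prod>Q)"
      by (simp_all only: of_nat_le_iff of_nat_0_less_iff)
    thus ?thesis by (rule ln_mono)
  qed
  also have "\<dots> \<le> ln (4 ^ m)"
  proof -
    have "(2 * m) choose m \<le> (\<Sum>k\<le>2*m. (2*m) choose k)" by (rule member_le_sum) auto
    also have "\<dots> = 4 ^ m" by (simp add: choose_row_sum power_mult)
    finally have "real ((2 * m) choose m) \<le> 4 ^ m" by (metis of_nat_le_iff of_nat_numeral of_nat_power)
    moreover have "real ((2 * m) choose m) > 0" by simp
    ultimately show ?thesis by simp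
  qed
  also have "\<dots> = real m * ln 4" by (simp add: ln_realpow)
  finally show ?thesis by simp
qed

lemma theta_le: "theta n \<le> 2 * ln 4 * real n"
proof (induction n rule: less_induct)
  case (less n)
  show ?case
  proof (cases "n \<le> 1")
    case True
    hence "PS n = {}" by (auto simp: PS_def dest: prime_gt_1_nat)
    thus ?thesis by (simp add: theta_def)
  next
    case False
    have l4: "ln (4::real) > 0" by simp
    show ?thesis
    proof (cases "even n")
      case True
      then obtain m where m: "n = 2 * m" by auto
      have "theta n \<le> theta m + real m * ln 4" using theta_double m by simp
      also have "theta m \<le> 2 * ln 4 * real m" using less False m by auto
      finally have "theta n \<le> real m * (3 * ln 4)" using m by (simp add: algebra_simps)
      also have "\<dots> \<le> real m * (4 * ln 4)" by (intro mult_left_mono) (use l4 in auto)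
      finally show ?thesis using m by (simp add: algebra_simps)
    next
      case odd: False
      then obtain m where m: "n = 2 * m + 1" using oddE by blast
      have m1: "m \<ge> 1" using False m by auto
      have t1: "theta (m + 1) \<le> 2 * ln 4 * real (m + 1)" using less[of "m+1"] m m1 by simp
      have "theta n \<le> theta (2 * (m + 1))" using m by (intro theta_mono) auto
      also have "\<dots> \<le> theta (m + 1) + real (m + 1) * ln 4" by (rule theta_double)
      finally have "theta n \<le> 3 * ln 4 * real (m + 1)" using t1 by (simp add: algebra_simps)
      also have "\<dots> \<le> 2 * ln 4 * real n" using m m1 l4 by (simp add: algebra_simps)
      finally show ?thesis .
    qed
  qed
qed


lemma sum_primes_dvd_le_ln:
  fixes n N :: nat
  assumes "n \<ge> 1"
  shows "(\<Sum>p\<in>PS N. if p dvd n then ln (real p) else 0) \<le> ln (real n)"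
proof -
  define Q where "Q = {p\<in>PS N. p dvd n}"
  have finQ: "finite Q" by (simp add: Q_def)
  have "(\<Sum>p\<in>PS N. if p dvd n then ln (real p) else 0) = (\<Sum>p\<in>Q. ln (real p))"
    unfolding Q_def by (rule sum.inter_filter[symmetric]) simp
  also have "\<dots> = ln (\<Prod>p\<in>Q. real p)"
    by (rule ln_prod[symmetric]) (auto simp: finQ Q_def PS_def prime_gt_0_nat)
  also have "\<dots> \<le> ln (real n)"
  proof (rule ln_mono)
    have "\<Prod>Q dvd n" by (rule prod_primes_dvd) (auto simp: finQ Q_def PS_def)
    hence "\<Prod>Q \<le> n" using assms by (intro dvd_imp_le) auto
    hence "real (\<Prod>Q) \<le> real n" by (simp only: of_nat_le_iff)
    thus "(\<Prod>p\<in>Q. real p) \<le> real n" by (simp add: of_nat_prod)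
    show "0 < (\<Prod>p\<in>Q. real p)" by (rule prod_pos) (auto simp: Q_def PS_def prime_gt_0_nat)
  qed
  finally show ?thesis .
qed

lemma card_multiples:
  fixes p N :: nat
  assumes "p \<ge> 1"
  shows "card {n\<in>{1..N}. p dvd n} = N div p"
proof -
  have "{n\<in>{1..N}. p dvd n} = (\<lambda>i. p * i) ` {1..N div p}"
  proof (intro equalityI subsetI)
    fix n assume "n \<in> {n\<in>{1..N}. p dvd n}"
    then obtain i where i: "n = p * i" "1 \<le> p * i" "p * i \<le> N" by auto
    hence "i \<ge> 1" by (cases i) auto
    moreover have "i \<le> N div p" using i assms by (simp add: less_eq_div_iff_mult_less_eq mult.commute)
    ultimately show "n \<in> (\<lambda>i. p * i) ` {1..N div p}" using i by auto
  next
    fix n assume "n \<in> (\<lambda>i. p * i) ` {1..N div p}"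
    then obtain i where "i \<in> {1..N div p}" "n = p * i" by blast
    hence i: "n = p * i" "1 \<le> i" "i \<le> N div p" by auto
    have "p * i \<le> N" using i assms by (simp add: less_eq_div_iff_mult_less_eq mult.commute)
    moreover have "p * i \<ge> 1" using i assms by simp
    ultimately show "n \<in> {n\<in>{1..N}. p dvd n}" using i by auto
  qed
  also have "card \<dots> = card {1..N div p}"
    by (rule card_image) (use assms in \<open>auto simp: inj_on_def\<close>)
  finally show ?thesis by simp
qed

lemma real_div_ge:
  fixes N p :: nat
  assumes "p \<ge> 1"
  shows "real (N div p) \<ge> real N / real p - 1"
proof -
  have e: "real N = real (N div p) * real p + real (N mod p)"
    by (metis of_nat_add of_nat_mult div_mult_mod_eq)
  have "N mod p < p" using assms by simp
  hence "real (N mod p) \<le> real p" by simp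
  hence "real N \<le> (real (N div p) + 1) * real p" using e by (simp add: algebra_simps)
  hence "real N / real p \<le> real (N div p) + 1" using assms by (simp add: field_simps)
  thus ?thesis by simp
qed

definition Rm :: "nat \<Rightarrow> real" where "Rm N = (\<Sum>p\<in>PS N. ln (real p) / real p)"

lemma mertens1:
  fixes N :: nat
  assumes "N \<ge> 1"
  shows "Rm N \<le> ln (real N) + 2 * ln 4"
proof -
  have "(\<Sum>n\<in>{1..N}. \<Sum>p\<in>PS N. if p dvd n then ln (real p) else 0) \<le> (\<Sum>n\<in>{1..N}. ln (real n))"
    by (intro sum_mono sum_primes_dvd_le_ln) auto
  also have "\<dots> \<le> (\<Sum>n\<in>{1..N}. ln (real N))"
    by (intro sum_mono ln_mono) auto
  also have "\<dots> = real N * ln (real N)" by simp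
  finally have A: "(\<Sum>n\<in>{1..N}. \<Sum>p\<in>PS N. if p dvd n then ln (real p) else 0) \<le> real N * ln (real N)" .
  have "(\<Sum>n\<in>{1..N}. \<Sum>p\<in>PS N. if p dvd n then ln (real p) else 0)
      = (\<Sum>p\<in>PS N. \<Sum>n\<in>{1..N}. if p dvd n then ln (real p) else 0)" by (rule sum.swap)
  also have "\<dots> = (\<Sum>p\<in>PS N. ln (real p) * real (N div p))"
  proof (intro sum.cong refl)
    fix p assume p: "p \<in> PS N"
    have "(\<Sum>n\<in>{1..N}. if p dvd n then ln (real p) else 0) = (\<Sum>n\<in>{n\<in>{1..N}. p dvd n}. ln (real p))"
      by (rule sum.inter_filter[symmetric]) simp
    also have "\<dots> = ln (real p) * real (N div p)"
    proof -
      have "p \<ge> 1" using p prime_gt_0_nat[of p] by (simp add: PS_def)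
      thus ?thesis using card_multiples[of p N] by simp
    qed
    finally show "(\<Sum>n\<in>{1..N}. if p dvd n then ln (real p) else 0) = ln (real p) * real (N div p)" .
  qed
  finally have B: "(\<Sum>p\<in>PS N. ln (real p) * real (N div p)) \<le> real N * ln (real N)" using A by simp
  have "(\<Sum>p\<in>PS N. ln (real p) * (real N / real p - 1)) \<le> (\<Sum>p\<in>PS N. ln (real p) * real (N div p))"
  proof (intro sum_mono mult_left_mono)
    fix p assume p: "p \<in> PS N"
    show "real N / real p - 1 \<le> real (N div p)" using p prime_gt_0_nat[of p] by (intro real_div_ge) (simp add: PS_def)
    show "0 \<le> ln (real p)" using p by (rule ln_PS_nonneg)
  qed
  also have "(\<Sum>p\<in>PS N. ln (real p) * (real N / real p - 1)) = real N * Rm N - theta N"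
    by (simp add: Rm_def theta_def algebra_simps sum_subtractf sum_distrib_left)
  finally have "real N * Rm N \<le> real N * ln (real N) + theta N" using B by simp
  also have "\<dots> \<le> real N * ln (real N) + real N * (2 * ln 4)" using theta_le[of N] by (simp add: mult.commute)
  finally have "real N * Rm N \<le> real N * (ln (real N) + 2 * ln 4)" by (simp add: algebra_simps)
  thus ?thesis using assms by (simp add: mult_le_cancel_left_pos)
qed


lemma abel_sum:
  fixes r g :: "nat \<Rightarrow> real"
  shows "(\<Sum>n\<in>{1..N}. r n * g n) = (\<Sum>i\<in>{1..N}. r i) * g N + (\<Sum>n\<in>{1..<N}. (\<Sum>i\<in>{1..n}. r i) * (g n - g (Suc n)))"
proof (induction N)
  case 0 thus ?case by simp
next
  case (Suc N)
  show ?case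
  proof (cases "N = 0")
    case True thus ?thesis by simp
  next
    case False
    have s1: "(\<Sum>n\<in>{1..Suc N}. r n * g n) = (\<Sum>n\<in>{1..N}. r n * g n) + r (Suc N) * g (Suc N)"
      by simp
    have s2: "(\<Sum>i\<in>{1..Suc N}. r i) = (\<Sum>i\<in>{1..N}. r i) + r (Suc N)" by simp
    have s3: "(\<Sum>n\<in>{1..<Suc N}. (\<Sum>i\<in>{1..n}. r i) * (g n - g (Suc n))) =
        (\<Sum>n\<in>{1..<N}. (\<Sum>i\<in>{1..n}. r i) * (g n - g (Suc n))) + (\<Sum>i\<in>{1..N}. r i) * (g N - g (Suc N))"
      using False by (subst sum.atLeastLessThan_Suc) auto
    show ?thesis unfolding s1 s2 s3 Suc by (simp add: algebra_simps)
  qed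
qed

lemma one_minus_div_le_ln:
  fixes a b :: real
  assumes "0 < a" "a \<le> b"
  shows "1 - a / b \<le> ln b - ln a"
proof -
  have "ln (a / b) \<le> a / b - 1" using assms by (intro ln_le_minus_one) auto
  moreover have "ln (a / b) = ln a - ln b" using assms by (simp add: ln_div)
  ultimately show ?thesis by simp
qed

definition Sp :: "nat \<Rightarrow> real" where "Sp N = (\<Sum>p\<in>PS N. 1 / real p)"

lemma Rm_eq: "Rm n = (\<Sum>i\<in>{1..n}. if prime i then ln (real i) / real i else 0)"
proof -
  have "PS n = {i\<in>{1..n}. prime i}" by (auto simp: PS_def prime_gt_0_nat Suc_le_eq)
  thus ?thesis unfolding Rm_def by (simp only:) (rule sum.inter_filter, simp)
qed

lemma mertens2:
  fixes N :: nat
  assumes N: "N \<ge> 2"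
  shows "Sp N \<le> ln (ln (real N)) + (1 + 4 * ln 4 / ln 2 - ln (ln 2))"
proof -
  define C :: real where "C = 2 * ln 4"
  have C0: "C \<ge> 0" by (simp add: C_def)
  define r where "r = (\<lambda>i. if prime i then ln (real i) / real i else 0)"
  define g :: "nat \<Rightarrow> real" where "g = (\<lambda>n. 1 / ln (real n))"
  have RR: "(\<Sum>i\<in>{1..n}. r i) = Rm n" for n by (simp add: Rm_eq r_def)
  have "Sp N = (\<Sum>n\<in>{1..N}. if prime n then 1 / real n else 0)"
  proof -
    have "PS N = {i\<in>{1..N}. prime i}" by (auto simp: PS_def prime_gt_0_nat Suc_le_eq)
    thus ?thesis unfolding Sp_def by (simp only:) (rule sum.inter_filter, simp)
  qed
  also have "\<dots> = (\<Sum>n\<in>{1..N}. r n * g n)"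
  proof (intro sum.cong refl)
    fix n assume "n \<in> {1..N}"
    show "(if prime n then 1 / real n else 0) = r n * g n"
    proof (cases "prime n")
      case True
      hence "real n > 1" using prime_gt_1_nat[of n] by simp
      hence "ln (real n) > 0" by simp
      thus ?thesis using True by (simp add: r_def g_def)
    qed (simp add: r_def)
  qed
  also have "\<dots> = Rm N * g N + (\<Sum>n\<in>{1..<N}. Rm n * (g n - g (Suc n)))"
    using abel_sum[of r g N] unfolding RR .
  also have "(\<Sum>n\<in>{1..<N}. Rm n * (g n - g (Suc n))) = (\<Sum>n\<in>{2..<N}. Rm n * (g n - g (Suc n)))"
  proof -
    have "{1..<N} = insert 1 {2..<N}" using N by auto
    moreover have "Rm 1 = 0"
    proof -
      have "PS 1 = {}" by (auto simp: PS_def dest: prime_gt_1_nat)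
      thus ?thesis by (simp add: Rm_def)
    qed
    ultimately show ?thesis by simp
  qed
  also have "\<dots> \<le> (\<Sum>n\<in>{2..<N}. (ln (ln (real (Suc n))) - ln (ln (real n))) + C * (g n - g (Suc n)))"
  proof (intro sum_mono)
    fix n assume n: "n \<in> {2..<N}"
    have l0: "ln (real n) > 0" using n by simp
    have l1: "ln (real n) \<le> ln (real (Suc n))" using n by simp
    have gd: "g n - g (Suc n) \<ge> 0" using l0 l1 by (simp add: g_def frac_le)
    have "Rm n \<le> ln (real n) + C" using mertens1[of n] n by (simp add: C_def)
    hence "Rm n * (g n - g (Suc n)) \<le> (ln (real n) + C) * (g n - g (Suc n))"
      using gd by (intro mult_right_mono) auto
    also have "\<dots> = (1 - ln (real n) / ln (real (Suc n))) + C * (g n - g (Suc n))"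
      using l0 l1 by (simp add: g_def field_simps add_divide_distrib)
    also have "1 - ln (real n) / ln (real (Suc n)) \<le> ln (ln (real (Suc n))) - ln (ln (real n))"
      by (rule one_minus_div_le_ln[OF l0 l1])
    finally show "Rm n * (g n - g (Suc n)) \<le> (ln (ln (real (Suc n))) - ln (ln (real n))) + C * (g n - g (Suc n))"
      by simp
  qed
  also have "\<dots> = (ln (ln (real N)) - ln (ln 2)) + C * (g 2 - g N)"
  proof -
    have "(\<Sum>n\<in>{2..<N}. ln (ln (real (Suc n))) - ln (ln (real n))) = ln (ln (real N)) - ln (ln (real 2))"
      using N by (rule sum_Suc_diff')
    moreover have "(\<Sum>n\<in>{2..<N}. g n - g (Suc n)) = g 2 - g N"
      using sum_Suc_diff'[OF N, of "\<lambda>n. - g n"] by simp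
    ultimately show ?thesis by (simp add: sum.distrib sum_distrib_left[symmetric])
  qed
  finally have A: "Sp N \<le> Rm N * g N + ((ln (ln (real N)) - ln (ln 2)) + C * (g 2 - g N))" by simp
  have lN: "ln (real N) \<ge> ln 2" using N by simp
  have l2: "ln (2::real) > 0" by simp
  have lN0: "ln (real N) > 0" using lN l2 by linarith
  have gN: "g N \<ge> 0" "g N \<le> 1 / ln 2" using lN l2 lN0 by (simp_all add: g_def frac_le)
  have "Rm N * g N \<le> (ln (real N) + C) * g N"
    using mertens1[of N] N gN by (intro mult_right_mono) (auto simp: C_def)
  also have "\<dots> = 1 + C * g N" using lN0 unfolding g_def by (simp add: add_divide_distrib)
  also have "\<dots> \<le> 1 + C * (1 / ln 2)" using gN C0 by (intro add_left_mono mult_left_mono) auto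
  finally have B: "Rm N * g N \<le> 1 + C * (1 / ln 2)" .
  have "g 2 - g N \<le> 1 / ln 2" using gN unfolding g_def by simp
  hence D: "C * (g 2 - g N) \<le> C * (1 / ln 2)" using C0 by (intro mult_left_mono) auto
  have E: "4 * ln 4 / ln 2 = 2 * (C * (1 / ln 2))" by (simp add: C_def)
  show ?thesis using A B D E by linarith
qed


definition wt :: "nat \<Rightarrow> real \<Rightarrow> nat \<Rightarrow> real" where
  "wt k s j = real (cnt k j) powr s"

lemma poly_exp: "\<exists>B>0. \<forall>j. real (Suc j) ^ (k + 1) \<le> B * (7/4) ^ j"
proof -
  define m where "m = k + 1"
  define t :: real where "t = ln (7/4)"
  have t: "t > 0" by (simp add: t_def)
  have m: "m > 0" by (simp add: m_def)
  define B where "B = (real m / t) ^ m * (7/4)"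
  have "B > 0" using t m by (simp add: B_def)
  moreover have "real (Suc j) ^ (k + 1) \<le> B * (7/4) ^ j" for j
  proof -
    define x where "x = real (Suc j) * t"
    have x0: "x \<ge> 0" using t by (simp add: x_def)
    have "x / real m = (t / real m) * real (Suc j)" unfolding x_def by simp
    hence xe: "(x / real m) ^ m = (t / real m) ^ m * real (Suc j) ^ m" by (simp only: power_mult_distrib)
    have "(x / real m) ^ m \<le> (1 + x / real m) ^ m" using x0 m by (intro power_mono) auto
    also have "\<dots> \<le> exp x" using x0 m by (intro exp_ge_one_plus_x_over_n_power_n) auto
    also have "exp x = exp t ^ Suc j" unfolding x_def by (rule exp_of_nat_mult)
    also have "\<dots> = (7/4) ^ Suc j" by (simp add: t_def)
    finally have A: "(t / real m) ^ m * real (Suc j) ^ m \<le> (7/4) ^ Suc j"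
      unfolding xe .
    have "real (Suc j) ^ m = (real m / t) ^ m * ((t / real m) ^ m * real (Suc j) ^ m)"
      using t m by (simp add: power_divide field_simps)
    also have "\<dots> \<le> (real m / t) ^ m * (7/4) ^ Suc j"
      using A t by (intro mult_left_mono) auto
    also have "\<dots> = B * (7/4) ^ j" by (simp add: B_def)
    finally show ?thesis by (simp add: m_def)
  qed
  ultimately show ?thesis by blast
qed

lemma geom_tail:
  fixes p :: real
  assumes "p \<ge> 2"
  shows "(\<Sum>j\<in>{2..N}. (7/4) ^ j / p ^ j) \<le> 49 / (2 * p^2)"
proof -
  define x where "x = 7 / (4 * p)"
  have x0: "x > 0" and x1: "x \<le> 7/8" using assms by (auto simp: x_def field_simps)
  have "(\<Sum>j\<in>{2..N}. (7/4) ^ j / p ^ j) = (\<Sum>j\<in>{2..N}. x ^ j)"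
    by (simp add: x_def power_divide)
  also have "\<dots> \<le> x^2 / (1 - x)"
  proof (cases "N < 2")
    case True thus ?thesis using x0 x1 by simp
  next
    case False
    have "x \<noteq> 1" using x1 by auto
    hence "(\<Sum>j\<in>{2..N}. x ^ j) = (x^2 - x ^ Suc N) / (1 - x)" using False by (simp add: sum_gp)
    also have "\<dots> \<le> x^2 / (1 - x)" using x0 x1 by (intro divide_right_mono) auto
    finally show ?thesis .
  qed
  also have "\<dots> \<le> x^2 * 8"
  proof -
    have "1 / (1 - x) \<le> 8" using x0 x1 by (simp add: field_simps)
    hence "x^2 * (1 / (1 - x)) \<le> x^2 * 8" by (intro mult_left_mono) auto
    thus ?thesis by simp
  qed
  also have "\<dots> = 49 / (2 * p^2)" using assms by (simp add: x_def field_simps power2_eq_square)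
  finally show ?thesis .
qed

context
  fixes k :: nat and s :: real
  assumes k1: "k \<ge> 1" and s0: "0 < s" and s1: "s \<le> 1"
begin

lemma wt_ge1: "wt k s j \<ge> 1"
  using cnt_pos[OF k1, of j] s0 by (simp add: wt_def ge_one_powr_ge_zero)

lemma wt_0: "wt k s 0 = 1" by (simp add: wt_def cnt_zero)

lemma wt_1: "wt k s 1 = real k powr s" using cnt_one[of k] by (simp add: wt_def)

lemma wt_le_cnt: "wt k s j \<le> real (cnt k j)"
proof -
  have c: "real (cnt k j) \<ge> 1" using cnt_pos[OF k1, of j] by simp
  have "real (cnt k j) powr s \<le> real (cnt k j) powr 1" using c s1 by (intro powr_mono) auto
  thus ?thesis using c by (simp add: wt_def)
qed

lemma wt_poly: "real j * wt k s j \<le> real (Suc j) ^ (k + 1)"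
proof -
  have "wt k s j \<le> real (Suc j) ^ k"
    using wt_le_cnt[of j] cnt_le[of k j] by (metis Suc_eq_plus1 of_nat_le_iff of_nat_power order_trans)
  hence "real j * wt k s j \<le> real (Suc j) * real (Suc j) ^ k"
    using wt_ge1[of j] by (intro mult_mono) auto
  thus ?thesis by simp
qed

end


definition Bk :: "nat \<Rightarrow> real" where
  "Bk k = (SOME B. B > 0 \<and> (\<forall>j. real (Suc j) ^ (k + 1) \<le> B * (7/4) ^ j))"

lemma Bk: "Bk k > 0" "real (Suc j) ^ (k + 1) \<le> Bk k * (7/4) ^ j"
  using someI_ex[OF poly_exp[of k]] unfolding Bk_def by blast+

lemma inv_sq_sum: "N \<ge> 1 \<Longrightarrow> (\<Sum>n\<in>{2..N}. 1 / real n ^ 2) \<le> 1 - 1 / real N"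
proof (induction N rule: dec_induct)
  case base thus ?case by simp
next
  case (step N)
  have "(\<Sum>n\<in>{2..Suc N}. 1 / real n ^ 2) = (\<Sum>n\<in>{2..N}. 1 / real n ^ 2) + 1 / real (Suc N) ^ 2"
    using step by (subst sum.cl_ivl_Suc) auto
  also have "\<dots> \<le> 1 - 1 / real N + 1 / real (Suc N) ^ 2" using step by simp
  also have "1 / real (Suc N) ^ 2 \<le> 1 / real N - 1 / real (Suc N)"
  proof -
    have n1: "real N \<ge> 1" using step(1) by simp
    have "1 / real N - 1 / real (Suc N) = 1 / (real N * (real N + 1))" using n1 by (simp add: field_simps)
    moreover have "1 / real (Suc N) ^ 2 \<le> 1 / (real N * (real N + 1))"
    proof (rule frac_le)
      show "0 < real N * (real N + 1)" using n1 by simp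
      show "real N * (real N + 1) \<le> real (Suc N) ^ 2" by (simp add: power2_eq_square algebra_simps)
    qed auto
    ultimately show ?thesis by simp
  qed
  finally show ?case by simp
qed

lemma inv_sq_primes: "(\<Sum>p\<in>PS N. 1 / real p ^ 2) \<le> 1"
proof (cases "N \<ge> 1")
  case True
  have "(\<Sum>p\<in>PS N. 1 / real p ^ 2) \<le> (\<Sum>n\<in>{2..N}. 1 / real n ^ 2)"
    by (intro sum_mono2) (auto simp: PS_def prime_ge_2_nat)
  also have "\<dots> \<le> 1 - 1 / real N" using inv_sq_sum[OF True] .
  finally have "(\<Sum>p\<in>PS N. 1 / real p ^ 2) \<le> 1 - 1 / real N" .
  moreover have "1 / real N \<ge> 0" by simp
  ultimately show ?thesis by linarith
next
  case False
  hence "PS N = {}" by (auto simp: PS_def dest: prime_gt_1_nat)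
  thus ?thesis by simp
qed

context
  fixes k :: nat and s :: real
  assumes k1: "k \<ge> 1" and s0: "0 < s" and s1: "s \<le> 1"
begin

definition "Ek = Bk k * 49 / 2"

lemma Ek_pos: "Ek > 0" using Bk(1)[of k] by (simp add: Ek_def)

lemma wt_tail_j:
  fixes p :: real assumes p: "p \<ge> 2"
  shows "(\<Sum>j\<in>{2..N}. real j * wt k s j / p ^ j) \<le> Ek / p^2"
proof -
  have "(\<Sum>j\<in>{2..N}. real j * wt k s j / p ^ j) \<le> (\<Sum>j\<in>{2..N}. Bk k * ((7/4) ^ j / p ^ j))"
  proof (intro sum_mono)
    fix j assume "j \<in> {2..N}"
    have "real j * wt k s j \<le> Bk k * (7/4) ^ j"
      using wt_poly[OF k1 s0 s1, of j] Bk(2)[of j k] by linarith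
    thus "real j * wt k s j / p ^ j \<le> Bk k * ((7/4) ^ j / p ^ j)" using p by (simp add: divide_right_mono)
  qed
  also have "\<dots> = Bk k * (\<Sum>j\<in>{2..N}. (7/4) ^ j / p ^ j)" by (simp add: sum_distrib_left)
  also have "\<dots> \<le> Bk k * (49 / (2 * p^2))" using Bk(1)[of k] geom_tail[OF p] by (intro mult_left_mono) auto
  also have "\<dots> = Ek / p^2" by (simp add: Ek_def)
  finally show ?thesis .
qed

lemma wt_tail:
  fixes p :: real assumes p: "p \<ge> 2"
  shows "(\<Sum>j\<in>{2..N}. wt k s j / p ^ j) \<le> Ek / p^2"
proof -
  have "(\<Sum>j\<in>{2..N}. wt k s j / p ^ j) \<le> (\<Sum>j\<in>{2..N}. real j * wt k s j / p ^ j)"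
  proof (intro sum_mono divide_right_mono)
    fix j assume "j \<in> {2..N}"
    hence "real j \<ge> 1" by simp
    thus "wt k s j \<le> real j * wt k s j" using wt_ge1[OF k1 s0 s1, of j] by simp
  qed (use p in simp)
  also have "\<dots> \<le> Ek / p^2" by (rule wt_tail_j[OF p])
  finally show ?thesis .
qed

lemma local_factor:
  fixes p :: real assumes p: "p \<ge> 2"
  shows "(\<Sum>j\<le>N. wt k s j / p ^ j) \<le> 1 + real k powr s / p + Ek / p^2"
proof (cases "N = 0")
  case True thus ?thesis using p Ek_pos by (simp add: wt_0[OF k1 s0 s1])
next
  case False
  have "{..N} = {0, 1} \<union> {2..N}" using False by auto
  hence "(\<Sum>j\<le>N. wt k s j / p ^ j) = (\<Sum>j\<in>{0,1}. wt k s j / p ^ j) + (\<Sum>j\<in>{2..N}. wt k s j / p ^ j)"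
    by (simp add: sum.union_disjoint)
  also have "(\<Sum>j\<in>{0,1}. wt k s j / p ^ j) = 1 + real k powr s / p" by (simp add: wt_0[OF k1 s0 s1] wt_1[OF k1 s0 s1, unfolded One_nat_def])
  finally show ?thesis using wt_tail[OF p, of N] by simp
qed

definition "M2c = 1 + 4 * ln 4 / ln 2 - ln (ln (2::real))"

lemma T_bound:
  assumes N: "N \<ge> 2"
  shows "(\<Sum>m\<in>{1..N}. F (wt k s) m / m) \<le> exp (real k powr s * M2c + Ek) * ln (real N) powr (real k powr s)"
proof -
  define K where "K = real k powr s"
  have K0: "K \<ge> 0" by (simp add: K_def)
  have "(\<Sum>m\<in>{1..N}. F (wt k s) m / m) \<le> (\<Prod>p\<in>PS N. \<Sum>j\<le>N. wt k s j / real p ^ j)"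
    unfolding PS_def
  proof (rule euler_bound)
    show "wt k s 0 = 1" by (rule wt_0[OF k1 s0 s1])
    fix j show "0 \<le> wt k s j" using wt_ge1[OF k1 s0 s1, of j] by simp
  qed
  also have "\<dots> \<le> (\<Prod>p\<in>PS N. exp (K / real p + Ek / real p ^ 2))"
  proof (intro prod_mono conjI)
    fix p assume p: "p \<in> PS N"
    hence p2: "real p \<ge> 2" by (auto simp: PS_def prime_ge_2_nat)
    show "0 \<le> (\<Sum>j\<le>N. wt k s j / real p ^ j)"
      using wt_ge1[OF k1 s0 s1] by (intro sum_nonneg divide_nonneg_nonneg) (auto intro: order_trans[OF zero_le_one])
    have "(\<Sum>j\<le>N. wt k s j / real p ^ j) \<le> 1 + (K / real p + Ek / real p ^ 2)"
      using local_factor[OF p2, of N] by (simp add: K_def)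
    also have "\<dots> \<le> exp (K / real p + Ek / real p ^ 2)" by (rule exp_ge_add_one_self)
    finally show "(\<Sum>j\<le>N. wt k s j / real p ^ j) \<le> exp (K / real p + Ek / real p ^ 2)" .
  qed
  also have "\<dots> = exp (K * Sp N + Ek * (\<Sum>p\<in>PS N. 1 / real p ^ 2))"
    by (simp add: exp_sum[symmetric] Sp_def sum.distrib sum_distrib_left)
  also have "\<dots> \<le> exp (K * (ln (ln (real N)) + M2c) + Ek)"
  proof -
    have "K * Sp N \<le> K * (ln (ln (real N)) + M2c)"
      using mertens2[OF N] K0 by (intro mult_left_mono) (auto simp: M2c_def)
    moreover have "Ek * (\<Sum>p\<in>PS N. 1 / real p ^ 2) \<le> Ek * 1"
      using inv_sq_primes[of N] Ek_pos by (intro mult_left_mono) auto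
    ultimately show ?thesis by simp
  qed
  also have "\<dots> = exp (K * M2c + Ek) * exp (K * ln (ln (real N)))"
    by (simp add: exp_add[symmetric] algebra_simps)
  also have "exp (K * ln (ln (real N))) = ln (real N) powr K"
  proof -
    have "ln (real N) > 0" using N by simp
    thus ?thesis by (simp add: powr_def mult.commute)
  qed
  finally show ?thesis by (simp add: K_def)
qed

end


lemma sqrt_step:
  fixes a b :: real
  assumes a: "a > 0" and ab: "a \<le> b" and b2: "b^2 = a^2 + 1"
  shows "1 / (b^2 * b) \<le> 2 / a - 2 / b"
proof -
  have b: "b > 0" using a ab by linarith
  have "(b - a) * (b + a) = 1" using b2 by (simp add: algebra_simps power2_eq_square)
  hence ba: "b - a = 1 / (a + b)" using a b by (simp add: field_simps)
  have "2 / a - 2 / b = 2 * (b - a) / (a * b)" using a b by (simp add: field_simps)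
  also have "\<dots> = 2 / (a * b * (a + b))" using a b by (simp add: ba field_simps)
  also have "2 / (a * b * (a + b)) \<ge> 2 / (b * b * (b + b))"
    using a b ab by (intro divide_left_mono mult_mono add_mono) (auto intro!: mult_pos_pos)
  moreover have "2 / (b * b * (b + b)) = 1 / (b^2 * b)" using b by (simp add: field_simps power2_eq_square)
  ultimately show ?thesis by (simp add: power2_eq_square)
qed

lemma sum_inv_n_sqrt: "N \<ge> 1 \<Longrightarrow> (\<Sum>n\<in>{2..N}. 1 / (real n * sqrt (real n))) \<le> 2 - 2 / sqrt (real N)"
proof (induction N rule: dec_induct)
  case base thus ?case by simp
next
  case (step N)
  have "(\<Sum>n\<in>{2..Suc N}. 1 / (real n * sqrt (real n))) =
        (\<Sum>n\<in>{2..N}. 1 / (real n * sqrt (real n))) + 1 / (real (Suc N) * sqrt (real (Suc N)))"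
    using step by (subst sum.cl_ivl_Suc) auto
  also have "1 / (real (Suc N) * sqrt (real (Suc N))) \<le> 2 / sqrt (real N) - 2 / sqrt (real (Suc N))"
  proof -
    have "1 / (sqrt (real (Suc N))^2 * sqrt (real (Suc N))) \<le> 2 / sqrt (real N) - 2 / sqrt (real (Suc N))"
      using step(1) by (intro sqrt_step) auto
    thus ?thesis by simp
  qed
  finally show ?case using step by simp
qed

lemma ln_le_2sqrt: "x > 0 \<Longrightarrow> ln x \<le> 2 * sqrt x"
proof -
  assume x: "x > 0"
  have "ln (sqrt x) \<le> sqrt x - 1" using x by (intro ln_le_minus_one) auto
  moreover have "ln (sqrt x) = ln x / 2" using x by (simp add: ln_sqrt)
  ultimately show ?thesis by simp
qed

lemma ln_sq_primes: "(\<Sum>p\<in>PS N. ln (real p) / real p ^ 2) \<le> 4"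
proof (cases "N \<ge> 1")
  case True
  have "(\<Sum>p\<in>PS N. ln (real p) / real p ^ 2) \<le> (\<Sum>p\<in>PS N. 2 * (1 / (real p * sqrt (real p))))"
  proof (intro sum_mono)
    fix p assume "p \<in> PS N"
    hence p: "real p > 0" by (auto simp: PS_def prime_gt_0_nat)
    have "ln (real p) / real p ^ 2 \<le> 2 * sqrt (real p) / real p ^ 2"
      using ln_le_2sqrt[OF p] p by (intro divide_right_mono) auto
    also have "\<dots> = 2 * (1 / (real p * sqrt (real p)))"
      using p by (simp add: field_simps power2_eq_square)
    finally show "ln (real p) / real p ^ 2 \<le> 2 * (1 / (real p * sqrt (real p)))" .
  qed
  also have "\<dots> \<le> (\<Sum>n\<in>{2..N}. 2 * (1 / (real n * sqrt (real n))))"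
    by (intro sum_mono2) (auto simp: PS_def prime_ge_2_nat)
  also have "\<dots> = 2 * (\<Sum>n\<in>{2..N}. 1 / (real n * sqrt (real n)))" by (simp add: sum_distrib_left)
  also have "\<dots> \<le> 2 * 2"
  proof -
    have "2 / sqrt (real N) \<ge> 0" by simp
    thus ?thesis using sum_inv_n_sqrt[OF True] by linarith
  qed
  finally show ?thesis by simp
next
  case False
  hence "PS N = {}" by (auto simp: PS_def dest: prime_gt_1_nat)
  thus ?thesis by simp
qed

lemma ln_expand:
  fixes n :: nat assumes "n > 0"
  shows "ln (real n) = (\<Sum>p\<in>prime_factors n. real (multiplicity p n) * ln (real p))"
proof -
  have "real n = real (\<Prod>p\<in>prime_factors n. p ^ multiplicity p n)"
    using arg_cong[OF prime_factorization_nat[OF assms], of real] .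
  also have "\<dots> = (\<Prod>p\<in>prime_factors n. real p ^ multiplicity p n)" by (simp add: of_nat_prod)
  finally have "ln (real n) = ln (\<Prod>p\<in>prime_factors n. real p ^ multiplicity p n)" by simp
  also have "\<dots> = (\<Sum>p\<in>prime_factors n. ln (real p ^ multiplicity p n))"
    by (rule ln_prod) (auto simp: in_prime_factors_iff prime_gt_0_nat)
  also have "\<dots> = (\<Sum>p\<in>prime_factors n. real (multiplicity p n) * ln (real p))"
    by (intro sum.cong refl) (auto simp: ln_realpow prime_factors_multiplicity prime_gt_0_nat)
  finally show ?thesis .
qed

lemma sum_inj_le:
  fixes f :: "'a \<Rightarrow> real" and h :: "'b \<Rightarrow> real"
  assumes "inj_on \<phi> S" "\<phi> ` S \<subseteq> T" "finite T" "\<And>t. t \<in> T \<Longrightarrow> h t \<ge> 0"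
    "\<And>x. x \<in> S \<Longrightarrow> f x \<le> h (\<phi> x)"
  shows "sum f S \<le> sum h T"
proof -
  have "sum f S \<le> sum (h \<circ> \<phi>) S" using assms(5) by (intro sum_mono) auto
  also have "\<dots> = sum h (\<phi> ` S)" using sum.reindex[OF assms(1), of h] by simp
  also have "\<dots> \<le> sum h T" using assms by (intro sum_mono2) auto
  finally show ?thesis .
qed


context
  fixes k :: nat and s :: real
  assumes k1: "k \<ge> 1" and s0: "0 < s" and s1: "s \<le> 1"
begin

lemma F_nonneg: "F (wt k s) n \<ge> 0"
  unfolding F_def using wt_ge1[OF k1 s0 s1] by (intro prod_nonneg) (auto intro: order_trans[OF zero_le_one])

lemma decomp:
  fixes n p N :: nat
  assumes n: "n \<in> {1..N}" and p: "p \<in> prime_factors n"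
  defines "j \<equiv> multiplicity p n"
  defines "m \<equiv> n div p ^ j"
  shows "n = p ^ j * m" "\<not> p dvd m" "1 \<le> m" "1 \<le> j" "j \<le> N" "m \<le> N" "p \<in> PS N"
    "F (wt k s) n = wt k s j * F (wt k s) m"
proof -
  have pr: "prime p" using p by (auto simp: in_prime_factors_iff)
  have n0: "n > 0" using n by auto
  show e: "n = p ^ j * m" unfolding m_def j_def by (simp add: multiplicity_dvd)
  show nd: "\<not> p dvd m" unfolding m_def j_def by (rule multiplicity_decompose) (use n0 pr in auto)
  show m1: "1 \<le> m" using e n0 by (cases m) auto
  show j1: "1 \<le> j" using p n0 unfolding j_def by (auto simp: prime_factors_multiplicity)
  show "j \<le> N" using multiplicity_le_self[OF pr n0] n unfolding j_def by auto
  have "p ^ j > 0" using pr by (simp add: prime_gt_0_nat)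
  hence "1 * m \<le> p ^ j * m" by (intro mult_right_mono) auto
  hence "m \<le> p ^ j * m" by simp
  moreover have "n \<le> N" using n by simp
  ultimately show "m \<le> N" using e by linarith
  have "p \<le> n" using p n0 by (auto simp: in_prime_factors_iff intro: dvd_imp_le)
  thus "p \<in> PS N" using pr n by (auto simp: PS_def)
  show "F (wt k s) n = wt k s j * F (wt k s) m"
    by (subst e) (rule F_mult[OF pr nd _ j1], use m1 in auto)
qed

definition "C3 = real k powr s * (2 * ln 4) + 4 * Ek k"

lemma C3_nonneg: "C3 \<ge> 0"
  using Ek_pos[OF k1 s0 s1] by (simp add: C3_def)

lemma G_bound:
  fixes m N :: nat
  assumes m: "m \<in> {1..N}"
  shows "(\<Sum>p\<in>PS N. \<Sum>j\<in>{1..N}. if p ^ j * m \<le> N then wt k s j * real j * ln (real p) else 0)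
         \<le> C3 * (real N / real m)"
proof -
  define K where "K = real k powr s"
  have m0: "m > 0" and N1: "N \<ge> 1" using m by auto
  have split: "{1..N} = insert 1 {2..N}" using N1 by auto
  have w1: "wt k s 1 = K" using wt_1[OF k1 s0 s1] by (simp add: K_def)
  have "(\<Sum>p\<in>PS N. \<Sum>j\<in>{1..N}. if p ^ j * m \<le> N then wt k s j * real j * ln (real p) else 0)
     = (\<Sum>p\<in>PS N. if p * m \<le> N then K * ln (real p) else 0)
     + (\<Sum>p\<in>PS N. \<Sum>j\<in>{2..N}. if p ^ j * m \<le> N then wt k s j * real j * ln (real p) else 0)"
  proof -
    have "(\<Sum>j\<in>{1..N}. if p ^ j * m \<le> N then wt k s j * real j * ln (real p) else 0)
       = (if p * m \<le> N then K * ln (real p) else 0)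
         + (\<Sum>j\<in>{2..N}. if p ^ j * m \<le> N then wt k s j * real j * ln (real p) else 0)" for p
    proof -
      have "(\<Sum>j\<in>{1..N}. if p ^ j * m \<le> N then wt k s j * real j * ln (real p) else 0)
       = (if p ^ 1 * m \<le> N then wt k s 1 * real 1 * ln (real p) else 0)
         + (\<Sum>j\<in>{2..N}. if p ^ j * m \<le> N then wt k s j * real j * ln (real p) else 0)"
        unfolding split by (subst sum.insert) auto
      also have "wt k s 1 * real 1 * ln (real p) = K * ln (real p)" using w1 by simp
      finally show ?thesis by simp
    qed
    thus ?thesis by (simp add: sum.distrib)
  qed
  also have "(\<Sum>p\<in>PS N. if p * m \<le> N then K * ln (real p) else 0) = K * theta (N div m)"
  proof -
    have "(\<Sum>p\<in>PS N. if p * m \<le> N then K * ln (real p) else 0) = (\<Sum>p\<in>{p\<in>PS N. p * m \<le> N}. K * ln (real p))"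
      by (rule sum.inter_filter[symmetric]) simp
    also have "{p\<in>PS N. p * m \<le> N} = PS (N div m)"
    proof (intro equalityI subsetI)
      fix p assume "p \<in> {p\<in>PS N. p * m \<le> N}"
      thus "p \<in> PS (N div m)" using m0 by (auto simp: PS_def less_eq_div_iff_mult_less_eq)
    next
      fix p assume p: "p \<in> PS (N div m)"
      hence "p * m \<le> N" using m0 by (auto simp: PS_def less_eq_div_iff_mult_less_eq)
      moreover have "p \<le> N"
      proof -
        have "p \<le> N div m" using p by (simp add: PS_def)
        thus ?thesis using div_le_dividend[of N m] by linarith
      qed
      ultimately show "p \<in> {p\<in>PS N. p * m \<le> N}" using p by (auto simp: PS_def)
    qed
    finally show ?thesis by (simp add: theta_def sum_distrib_left)
  qed
  also have "\<dots> \<le> K * (2 * ln 4 * (real N / real m))"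
  proof (intro mult_left_mono)
    have "theta (N div m) \<le> 2 * ln 4 * real (N div m)" by (rule theta_le)
    also have "\<dots> \<le> 2 * ln 4 * (real N / real m)" by (intro mult_left_mono of_nat_div_le_of_nat) auto
    finally show "theta (N div m) \<le> 2 * ln 4 * (real N / real m)" .
  qed (simp add: K_def)
  also have "(\<Sum>p\<in>PS N. \<Sum>j\<in>{2..N}. if p ^ j * m \<le> N then wt k s j * real j * ln (real p) else 0)
      \<le> (\<Sum>p\<in>PS N. (real N / real m) * ln (real p) * (Ek k / real p ^ 2))"
  proof (intro sum_mono)
    fix p assume p: "p \<in> PS N"
    have p2: "real p \<ge> 2" using p by (auto simp: PS_def prime_ge_2_nat)
    have lp: "ln (real p) \<ge> 0" using p by (rule ln_PS_nonneg)
    have "(\<Sum>j\<in>{2..N}. if p ^ j * m \<le> N then wt k s j * real j * ln (real p) else 0)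
        \<le> (\<Sum>j\<in>{2..N}. (real N / real m) * ln (real p) * (real j * wt k s j / real p ^ j))"
    proof (intro sum_mono)
      fix j assume j: "j \<in> {2..N}"
      have wj: "wt k s j \<ge> 0" using wt_ge1[OF k1 s0 s1, of j] by simp
      have pj: "real p ^ j > 0" using p2 by simp
      have rhs0: "(real N / real m) * ln (real p) * (real j * wt k s j / real p ^ j) \<ge> 0"
        using wj lp pj by (intro mult_nonneg_nonneg divide_nonneg_nonneg) auto
      show "(if p ^ j * m \<le> N then wt k s j * real j * ln (real p) else 0)
          \<le> (real N / real m) * ln (real p) * (real j * wt k s j / real p ^ j)"
      proof (cases "p ^ j * m \<le> N")
        case True
        hence "real p ^ j * real m \<le> real N" by (metis of_nat_le_iff of_nat_mult of_nat_power)
        hence q: "1 \<le> (real N / real m) / real p ^ j" using m0 pj by (simp add: field_simps)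
        have nn: "0 \<le> wt k s j * real j * ln (real p)" using wj lp by (intro mult_nonneg_nonneg) auto
        have "wt k s j * real j * ln (real p) = 1 * (wt k s j * real j * ln (real p))" by simp
        also have "\<dots> \<le> ((real N / real m) / real p ^ j) * (wt k s j * real j * ln (real p))"
          by (rule mult_right_mono[OF q nn])
        also have "\<dots> = (real N / real m) * ln (real p) * (real j * wt k s j / real p ^ j)" by simp
        finally show ?thesis using True by simp
      qed (use rhs0 in simp)
    qed
    also have "\<dots> = (real N / real m) * ln (real p) * (\<Sum>j\<in>{2..N}. real j * wt k s j / real p ^ j)"
      by (simp add: sum_distrib_left)
    also have "\<dots> \<le> (real N / real m) * ln (real p) * (Ek k / real p ^ 2)"
      using wt_tail_j[OF k1 s0 s1 p2, of N] lp by (intro mult_left_mono) auto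
    finally show "(\<Sum>j\<in>{2..N}. if p ^ j * m \<le> N then wt k s j * real j * ln (real p) else 0)
        \<le> (real N / real m) * ln (real p) * (Ek k / real p ^ 2)" .
  qed
  also have "(\<Sum>p\<in>PS N. (real N / real m) * ln (real p) * (Ek k / real p ^ 2))
      = (real N / real m) * Ek k * (\<Sum>p\<in>PS N. ln (real p) / real p ^ 2)"
    by (simp add: sum_distrib_left mult_ac)
  also have "\<dots> \<le> (real N / real m) * Ek k * 4"
    using ln_sq_primes[of N] Ek_pos[OF k1 s0 s1] by (intro mult_left_mono) auto
  finally have "(\<Sum>p\<in>PS N. \<Sum>j\<in>{1..N}. if p ^ j * m \<le> N then wt k s j * real j * ln (real p) else 0)
     \<le> K * (2 * ln 4 * (real N / real m)) + real N / real m * Ek k * 4" by simp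
  moreover have "C3 * (real N / real m) = K * (2 * ln 4 * (real N / real m)) + real N / real m * Ek k * 4"
    by (simp add: C3_def K_def algebra_simps)
  ultimately show ?thesis by linarith
qed

end


context
  fixes k :: nat and s :: real
  assumes k1: "k \<ge> 1" and s0: "0 < s" and s1: "s \<le> 1"
begin

lemma log_sum:
  "(\<Sum>n\<in>{1..N}. F (wt k s) n * ln (real n)) \<le> C3 k s * real N * (\<Sum>m\<in>{1..N}. F (wt k s) m / real m)"
proof -
  define a where "a = F (wt k s)"
  define f where "f = (\<lambda>(n, p). a n * (real (multiplicity p n) * ln (real p)))"
  define \<phi> where "\<phi> = (\<lambda>(n::nat, p::nat). (n div p ^ multiplicity p n, (p, multiplicity p n)))"
  define T where "T = {1..N} \<times> (PS N \<times> {1..N})"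
  define h where "h = (\<lambda>(m::nat, (p::nat, j::nat)). if p ^ j * m \<le> N then a m * (wt k s j * real j * ln (real p)) else 0)"
  have a0: "a m \<ge> 0" for m unfolding a_def by (rule F_nonneg[OF k1 s0 s1])
  have "(\<Sum>n\<in>{1..N}. a n * ln (real n)) = (\<Sum>n\<in>{1..N}. \<Sum>p\<in>prime_factors n. a n * (real (multiplicity p n) * ln (real p)))"
    by (intro sum.cong refl) (auto simp: ln_expand sum_distrib_left)
  also have "\<dots> = sum f (Sigma {1..N} prime_factors)"
    unfolding f_def by (rule sum.Sigma) auto
  also have "\<dots> \<le> sum h T"
  proof (rule sum_inj_le)
    show "inj_on \<phi> (Sigma {1..N} prime_factors)"
    proof (rule inj_onI)
      fix x y assume x: "x \<in> Sigma {1..N} prime_factors" and y: "y \<in> Sigma {1..N} prime_factors"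
        and e: "\<phi> x = \<phi> y"
      obtain n p where xp: "x = (n, p)" by force
      obtain n' p' where yp: "y = (n', p')" by force
      have pp: "p = p'" and jj: "multiplicity p n = multiplicity p' n'"
        and mm: "n div p ^ multiplicity p n = n' div p' ^ multiplicity p' n'"
        using e by (auto simp: \<phi>_def xp yp)
      have xn: "n \<in> {1..N}" "p \<in> prime_factors n" using x xp by auto
      have yn: "n' \<in> {1..N}" "p' \<in> prime_factors n'" using y yp by auto
      have "n = p ^ multiplicity p n * (n div p ^ multiplicity p n)"
        by (rule decomp(1)[OF k1 s0 s1 xn])
      also have "\<dots> = p' ^ multiplicity p' n' * (n' div p' ^ multiplicity p' n')" using pp jj mm by simp
      also have "\<dots> = n'" by (rule decomp(1)[OF k1 s0 s1 yn, symmetric])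
      finally show "x = y" using pp xp yp by simp
    qed
    show "\<phi> ` Sigma {1..N} prime_factors \<subseteq> T"
    proof
      fix z assume "z \<in> \<phi> ` Sigma {1..N} prime_factors"
      then obtain n p where np: "n \<in> {1..N}" "p \<in> prime_factors n" "z = \<phi> (n, p)" by auto
      show "z \<in> T" using decomp(3-7)[OF k1 s0 s1 np(1,2)] np(3) by (auto simp: T_def \<phi>_def)
    qed
    show "finite T" by (simp add: T_def)
    fix t assume "t \<in> T"
    then obtain m p j where t: "t = (m, (p, j))" "p \<in> PS N" by (auto simp: T_def)
    have "ln (real p) \<ge> 0" using t(2) by (rule ln_PS_nonneg)
    moreover have "wt k s j \<ge> 0" using wt_ge1[OF k1 s0 s1, of j] by simp
    ultimately show "h t \<ge> 0" using a0[of m] by (auto simp: h_def t intro!: mult_nonneg_nonneg)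
  next
    fix x assume x: "x \<in> Sigma {1..N} prime_factors"
    then obtain n p where xp: "x = (n, p)" "n \<in> {1..N}" "p \<in> prime_factors n" by auto
    define j where "j = multiplicity p n"
    define m where "m = n div p ^ j"
    have d: "n = p ^ j * m" "a n = wt k s j * a m"
      using decomp(1,8)[OF k1 s0 s1 xp(2,3)] by (simp_all add: j_def m_def a_def)
    have "\<phi> x = (m, (p, j))" by (simp add: \<phi>_def xp m_def j_def)
    moreover have "p ^ j * m \<le> N" using d(1) xp(2) by simp
    ultimately have "h (\<phi> x) = a m * (wt k s j * real j * ln (real p))" by (simp add: h_def)
    also have "\<dots> = f x" by (simp add: f_def xp d(2) j_def[symmetric] algebra_simps)
    finally show "f x \<le> h (\<phi> x)" by simp
  qed
  also have "sum h T = (\<Sum>m\<in>{1..N}. \<Sum>p\<in>PS N. \<Sum>j\<in>{1..N}. h (m, (p, j)))"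
    unfolding T_def by (simp add: sum.cartesian_product case_prod_beta)
  also have "\<dots> = (\<Sum>m\<in>{1..N}. a m * (\<Sum>p\<in>PS N. \<Sum>j\<in>{1..N}. if p ^ j * m \<le> N then wt k s j * real j * ln (real p) else 0))"
    unfolding h_def sum_distrib_left by (intro sum.cong refl) auto
  also have "\<dots> \<le> (\<Sum>m\<in>{1..N}. a m * (C3 k s * (real N / real m)))"
    by (intro sum_mono mult_left_mono G_bound[OF k1 s0 s1] a0)
  also have "\<dots> = C3 k s * real N * (\<Sum>m\<in>{1..N}. a m / real m)"
    by (simp add: sum_distrib_left mult_ac)
  finally show ?thesis by (simp add: a_def)
qed

lemma M_bound:
  assumes N: "N \<ge> 2"
  shows "(\<Sum>n\<in>{1..N}. F (wt k s) n) \<le>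
     (C3 k s + 1) * exp (real k powr s * M2c + Ek k) * real N * ln (real N) powr (real k powr s - 1)"
proof -
  define a where "a = F (wt k s)"
  define T where "T = (\<Sum>m\<in>{1..N}. a m / real m)"
  have a0: "a m \<ge> 0" for m unfolding a_def by (rule F_nonneg[OF k1 s0 s1])
  have lN: "ln (real N) > 0" using N by simp
  have "(\<Sum>n\<in>{1..N}. a n) * ln (real N) = (\<Sum>n\<in>{1..N}. a n * ln (real N))"
    by (rule sum_distrib_right)
  also have "\<dots> = (\<Sum>n\<in>{1..N}. a n * ln (real n) + a n * ln (real N / real n))"
    using N by (intro sum.cong refl) (auto simp: ln_div algebra_simps)
  also have "\<dots> = (\<Sum>n\<in>{1..N}. a n * ln (real n)) + (\<Sum>n\<in>{1..N}. a n * ln (real N / real n))"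
    by (rule sum.distrib)
  also have "(\<Sum>n\<in>{1..N}. a n * ln (real n)) \<le> C3 k s * real N * T"
    unfolding a_def T_def by (rule log_sum)
  also have "(\<Sum>n\<in>{1..N}. a n * ln (real N / real n)) \<le> (\<Sum>n\<in>{1..N}. a n * (real N / real n))"
    using N by (intro sum_mono mult_left_mono a0 ln_bound) auto
  also have "\<dots> = real N * T" by (simp add: T_def sum_distrib_left mult_ac)
  finally have A: "(\<Sum>n\<in>{1..N}. a n) * ln (real N) \<le> (C3 k s + 1) * real N * T" by (simp add: algebra_simps)
  have "T \<le> exp (real k powr s * M2c + Ek k) * ln (real N) powr (real k powr s)"
    unfolding T_def a_def by (rule T_bound[OF k1 s0 s1 N])
  hence "(C3 k s + 1) * real N * T \<le> (C3 k s + 1) * real N * (exp (real k powr s * M2c + Ek k) * ln (real N) powr (real k powr s))"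
    using C3_nonneg[OF k1 s0 s1] by (intro mult_left_mono) auto
  with A have B: "(\<Sum>n\<in>{1..N}. a n) * ln (real N) \<le> (C3 k s + 1) * exp (real k powr s * M2c + Ek k) * real N * ln (real N) powr (real k powr s)"
    by (simp add: algebra_simps)
  have "ln (real N) powr (real k powr s) = ln (real N) powr (real k powr s - 1) * ln (real N)"
    using lN by (simp add: powr_diff)
  with B have "(\<Sum>n\<in>{1..N}. a n) * ln (real N) \<le> ((C3 k s + 1) * exp (real k powr s * M2c + Ek k) * real N * ln (real N) powr (real k powr s - 1)) * ln (real N)"
    by (simp add: algebra_simps)
  thus ?thesis using lN by (simp add: a_def)
qed

end


lemma exp_neg_bound:
  fixes u :: real assumes u: "u \<ge> 0"
  shows "exp (-u) \<le> 1 - u + u^2 / 2"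
proof -
  define q where "q = 1 + u + u^2 / 2"
  have q: "q \<le> exp u" unfolding q_def using exp_lower_Taylor_quadratic[OF u] .
  have q0: "q > 0" using u by (simp add: q_def add_pos_nonneg)
  have "exp (-u) = 1 / exp u" by (simp add: exp_minus field_simps)
  also have "\<dots> \<le> 1 / q" using q q0 by (intro divide_left_mono) auto
  also have "\<dots> \<le> 1 - u + u^2 / 2"
  proof -
    have "q * (1 - u + u^2 / 2) = 1 + u^4 / 4" by (simp add: q_def algebra_simps power2_eq_square power4_eq_xxxx)
    hence "1 \<le> q * (1 - u + u^2 / 2)" by simp
    thus ?thesis using q0 by (simp add: field_simps)
  qed
  finally show ?thesis .
qed

lemma exponents:
  fixes k :: nat and \<epsilon> :: real
  assumes k: "k \<ge> 2" and e0: "0 < \<epsilon>" and e1: "\<epsilon> \<le> 1"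
  defines "\<delta> \<equiv> \<epsilon> / (2 * real k * ln (real k) ^ 2 + 2)"
  defines "s \<equiv> 1 - \<delta>"
  defines "K \<equiv> real k powr s"
  defines "\<tau> \<equiv> real k * ln (real k) - \<epsilon> / 2"
  shows "(1 - s) * \<tau> + K - real k < 0"
    and "(real k * ln (real k) - real k + 1 - \<epsilon>) - s * \<tau> + K - 1 < 0"
    and "0 < s" "s < 1" "K \<ge> 1"
proof -
  define l where "l = ln (real k)"
  have l: "l > 0" using k by (simp add: l_def)
  have kr: "real k \<ge> 2" using k by simp
  have den: "2 * real k * l ^ 2 + 2 > 0" using l kr by (simp add: add_pos_nonneg)
  have d0: "\<delta> > 0" unfolding \<delta>_def l_def[symmetric] using e0 den by simp
  have kdl: "real k * \<delta> * l^2 \<le> \<epsilon> / 2"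
  proof -
    have "real k * \<delta> * l^2 = \<epsilon> * (real k * l^2) / (2 * real k * l ^ 2 + 2)"
      unfolding \<delta>_def l_def[symmetric] by (simp add: field_simps)
    also have "\<dots> \<le> \<epsilon> * (real k * l^2) / (2 * real k * l ^ 2)"
      using e0 l kr den by (intro divide_left_mono) (auto intro!: mult_pos_pos)
    also have "\<dots> = \<epsilon> / 2" using l kr by (simp add: field_simps)
    finally show ?thesis .
  qed
  have d1: "\<delta> \<le> 1/2"
  proof -
    have "\<delta> \<le> \<epsilon> / 2" unfolding \<delta>_def l_def[symmetric] using e0 den l kr
      by (intro divide_left_mono) (auto simp: add_pos_nonneg)
    thus ?thesis using e1 by simp
  qed
  define u where "u = \<delta> * l"
  have u0: "u \<ge> 0" using d0 l by (simp add: u_def)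
  have KK: "K = real k * exp (-u)"
  proof -
    have "K = exp (s * l)" using kr by (simp add: K_def powr_def l_def)
    also have "s * l = l - u" by (simp add: s_def u_def algebra_simps)
    also have "exp (l - u) = real k * exp (-u)" using kr by (simp add: exp_diff l_def exp_minus field_simps)
    finally show ?thesis .
  qed
  have Kb: "K \<le> real k * (1 - u + u^2 / 2)" unfolding KK using exp_neg_bound[OF u0] kr by simp
  have P: "real k * u^2 = \<delta> * (real k * \<delta> * l^2)" by (simp add: u_def power2_eq_square)
  have P2: "real k * u^2 \<le> \<delta> * (\<epsilon> / 2)" unfolding P using kdl d0 by (intro mult_left_mono) auto
  have t1: "(1 - s) * \<tau> = real k * u - \<delta> * \<epsilon> / 2"
    by (simp add: s_def \<tau>_def l_def[symmetric] u_def algebra_simps)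
  have t2: "s * \<tau> = real k * l - \<epsilon> / 2 - (real k * u - \<delta> * \<epsilon> / 2)"
    unfolding s_def \<tau>_def l_def[symmetric] u_def by (simp add: field_simps)
  have t3: "real k * (1 - u + u^2 / 2) = real k - real k * u + real k * u^2 / 2"
    by (simp add: algebra_simps)
  have t4: "\<delta> * (\<epsilon> / 2) = \<delta> * \<epsilon> / 2" by simp
  have t5: "\<delta> * \<epsilon> > 0" using d0 e0 by simp
  show "(1 - s) * \<tau> + K - real k < 0" using t1 t3 t4 t5 Kb P2 by linarith
  show "(real k * ln (real k) - real k + 1 - \<epsilon>) - s * \<tau> + K - 1 < 0"
    using t2 t3 t4 t5 Kb P2 e0 unfolding l_def by linarith
  show "0 < s" "s < 1" using d0 d1 by (simp_all add: s_def)
  show "K \<ge> 1" unfolding K_def using kr d1 by (intro ge_one_powr_ge_zero) (auto simp: s_def)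
qed


definition Afn :: "nat \<Rightarrow> nat \<Rightarrow> real" where "Afn k n = F (\<lambda>j. real (cnt k j)) n"

lemma d_le_A: "n > 0 \<Longrightarrow> real (divisor_k k n) \<le> Afn k n"
proof -
  assume n: "n > 0"
  have "divisor_k k n \<le> (\<Prod>p\<in>prime_factors n. cnt k (multiplicity p n))" by (rule divisor_k_le[OF n])
  hence "real (divisor_k k n) \<le> real (\<Prod>p\<in>prime_factors n. cnt k (multiplicity p n))"
    by (simp only: of_nat_le_iff)
  thus ?thesis by (simp add: Afn_def F_def of_nat_prod)
qed

lemma a_eq: "F (wt k s) n = Afn k n powr s"
  by (simp add: Afn_def F_def wt_def prod_powr_distrib)

lemma A_ge1: "k \<ge> 1 \<Longrightarrow> Afn k n \<ge> 1"
  unfolding Afn_def F_def by (intro prod_ge_1) (use cnt_pos in auto)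

lemma pw1:
  assumes "k \<ge> 1" "T > 0" "Afn k n \<ge> T" "s \<ge> 0"
  shows "1 \<le> F (wt k s) n / T powr s"
proof -
  have "T powr s \<le> Afn k n powr s" using assms by (intro powr_mono2) auto
  moreover have "T powr s > 0" using assms by simp
  ultimately show ?thesis by (simp add: a_eq)
qed

lemma pw2:
  assumes k: "k \<ge> 1" and n: "n > 0" and T: "T > 0" and s0: "s \<ge> 0" and s1: "s \<le> 1"
  shows "(if Afn k n < T then real (divisor_k k n) else 0) \<le> F (wt k s) n * T powr (1 - s)"
proof (cases "Afn k n < T")
  case True
  have A1: "Afn k n \<ge> 1" using A_ge1[OF k] .
  have "real (divisor_k k n) \<le> Afn k n" by (rule d_le_A[OF n])
  also have "\<dots> = Afn k n powr s * Afn k n powr (1 - s)" using A1 by (simp add: powr_add[symmetric])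
  also have "\<dots> \<le> Afn k n powr s * T powr (1 - s)"
    using True A1 s1 by (intro mult_left_mono powr_mono2) auto
  finally show ?thesis using True by (simp add: a_eq)
next
  case False
  have "F (wt k s) n \<ge> 0" by (simp add: a_eq)
  thus ?thesis using False T by simp
qed

lemma main_count:
  fixes k :: nat and s T X H \<eta> :: real
  assumes k: "k \<ge> 2" and s0: "0 < s" and s1: "s < 1" and T: "T > 0" and X: "X \<ge> 3"
    and H1: "1 \<le> H" and HX: "H \<le> X" and eta: "\<eta> > 0"
  shows "real (card {x :: nat. X \<le> real x \<and> real x \<le> 2 * X \<and>
       (\<Sum>n\<in>{n :: nat. x < n \<and> real n \<le> real x + H}. real (divisor_k k n))
         > \<eta> * H * ln (real x) ^ (k - 1)})
     \<le> (H / T powr s + T powr (1 - s) / (\<eta> * ln X ^ (k - 1))) * (\<Sum>n\<in>{1..nat \<lfloor>3 * X\<rfloor>}. F (wt k s) n)"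
proof -
  have k1: "k \<ge> 1" using k by simp
  define a where "a = F (wt k s)"
  define A where "A = Afn k"
  define d where "d = (\<lambda>n. real (divisor_k k n))"
  define L where "L = ln X"
  define N3 where "N3 = nat \<lfloor>3 * X\<rfloor>"
  define R where "R = {x :: nat. X \<le> real x \<and> real x \<le> 2 * X}"
  define I where "I = (\<lambda>x::nat. {n :: nat. x < n \<and> real n \<le> real x + H})"
  define Bad where "Bad = {x :: nat. X \<le> real x \<and> real x \<le> 2 * X \<and>
       (\<Sum>n\<in>{n :: nat. x < n \<and> real n \<le> real x + H}. real (divisor_k k n)) > \<eta> * H * ln (real x) ^ (k - 1)}"
  define SA where "SA = (\<Sum>n\<in>{1..N3}. a n)"
  have a0: "a n \<ge> 0" for n by (simp add: a_def a_eq)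
  have SA0: "SA \<ge> 0" unfolding SA_def by (intro sum_nonneg a0)
  have L0: "L > 0" using X by (simp add: L_def)
  have finR: "finite R"
    by (rule finite_subset[of _ "{..nat \<lfloor>2 * X\<rfloor>}"]) (auto simp: R_def intro: le_nat_floor)
  have finI: "finite (I x)" for x
  proof (rule finite_subset[of _ "{..nat \<lfloor>real x + H\<rfloor>}"])
    show "I x \<subseteq> {..nat \<lfloor>real x + H\<rfloor>}"
    proof
      fix n assume "n \<in> I x"
      hence "real n \<le> real x + H" by (simp add: I_def)
      hence "n \<le> nat \<lfloor>real x + H\<rfloor>" by (rule le_nat_floor)
      thus "n \<in> {..nat \<lfloor>real x + H\<rfloor>}" by simp
    qed
  qed simp
  have inI: "n \<ge> 1 \<and> n \<le> N3" if "x \<in> R" "n \<in> I x" for x n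
  proof -
    have "real n \<le> 3 * X" using that HX by (auto simp: R_def I_def)
    hence "n \<le> N3" unfolding N3_def by (rule le_nat_floor)
    moreover have "n \<ge> 1" using that by (auto simp: I_def)
    ultimately show ?thesis by simp
  qed
  define W where "W = (\<Sum>x\<in>R. \<Sum>n\<in>I x. a n)"
  have W: "W \<le> H * SA"
  proof -
    have "W = sum (\<lambda>(x, n). a n) (Sigma R I)" unfolding W_def by (rule sum.Sigma) (auto simp: finR finI)
    also have "\<dots> \<le> sum (\<lambda>(n, i). a n) ({1..N3} \<times> {1..nat \<lfloor>H\<rfloor>})"
    proof (rule sum_inj_le[where \<phi> = "\<lambda>(x, n). (n, n - x)"])
      show "inj_on (\<lambda>(x, n). (n, n - x)) (Sigma R I)"
        by (rule inj_onI) (auto simp: I_def)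
      show "(\<lambda>(x, n). (n, n - x)) ` Sigma R I \<subseteq> {1..N3} \<times> {1..nat \<lfloor>H\<rfloor>}"
      proof
        fix z assume "z \<in> (\<lambda>(x, n). (n, n - x)) ` Sigma R I"
        then obtain x n where xn: "x \<in> R" "n \<in> I x" "z = (n, n - x)" by auto
        have "x < n" "real n \<le> real x + H" using xn by (auto simp: I_def)
        hence "real (n - x) \<le> H" by (simp add: of_nat_diff)
        hence "n - x \<le> nat \<lfloor>H\<rfloor>" by (rule le_nat_floor)
        thus "z \<in> {1..N3} \<times> {1..nat \<lfloor>H\<rfloor>}" using inI[OF xn(1,2)] xn(3) \<open>x < n\<close> by auto
      qed
    qed (auto simp: a0)
    also have "\<dots> = (\<Sum>n\<in>{1..N3}. \<Sum>i\<in>{1..nat \<lfloor>H\<rfloor>}. a n)"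
      by (rule sum.cartesian_product[symmetric])
    also have "\<dots> = real (nat \<lfloor>H\<rfloor>) * SA" by (simp add: SA_def sum_distrib_left mult.commute)
    also have "\<dots> \<le> H * SA"
    proof (intro mult_right_mono SA0)
      show "real (nat \<lfloor>H\<rfloor>) \<le> H" using H1 by linarith
    qed
    finally show ?thesis .
  qed
  define B1 where "B1 = {x\<in>R. \<exists>n\<in>I x. A n \<ge> T}"
  define c where "c = \<eta> * H * L ^ (k - 1)"
  have c0: "c > 0" using eta H1 L0 by (simp add: c_def)
  define S' where "S' = (\<lambda>x. \<Sum>n\<in>I x. if A n < T then d n else 0)"
  define B2 where "B2 = {x\<in>R. S' x > c}"
  have sub: "Bad \<subseteq> B1 \<union> B2"
  proof
    fix x assume x: "x \<in> Bad"
    show "x \<in> B1 \<union> B2"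
    proof (cases "x \<in> B1")
      case False
      have xR: "x \<in> R" using x by (auto simp: Bad_def R_def)
      have "\<forall>n\<in>I x. A n < T" using False xR by (auto simp: B1_def)
      hence s1: "S' x = (\<Sum>n\<in>I x. d n)" unfolding S'_def by (intro sum.cong refl) auto
      have s2: "(\<Sum>n\<in>I x. d n) > \<eta> * H * ln (real x) ^ (k - 1)" using x by (simp add: Bad_def I_def d_def)
      have s3: "\<eta> * H * ln (real x) ^ (k - 1) \<ge> c"
      proof -
        have "real x \<ge> X" using xR by (simp add: R_def)
        hence "ln (real x) \<ge> L" using X by (simp add: L_def)
        hence "L ^ (k - 1) \<le> ln (real x) ^ (k - 1)" using L0 by (intro power_mono) auto
        thus ?thesis unfolding c_def using eta H1 by (intro mult_left_mono) auto
      qed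
      have "S' x > c" using s1 s2 s3 by linarith
      thus ?thesis using xR by (auto simp: B2_def)
    qed auto
  qed
  have finB1: "finite B1" and finB2: "finite B2" using finR by (auto simp: B1_def B2_def)
  have cB1: "real (card B1) \<le> W / T powr s"
  proof -
    have "real (card B1) = (\<Sum>x\<in>B1. 1)" by simp
    also have "\<dots> \<le> (\<Sum>x\<in>B1. \<Sum>n\<in>I x. a n / T powr s)"
    proof (intro sum_mono)
      fix x assume "x \<in> B1"
      then obtain n where n: "n \<in> I x" "A n \<ge> T" and xR: "x \<in> R" by (auto simp: B1_def)
      have "1 \<le> a n / T powr s" unfolding a_def using pw1[OF k1 T n(2)[unfolded A_def]] s0 by simp
      also have "\<dots> \<le> (\<Sum>n\<in>I x. a n / T powr s)"
        by (rule member_le_sum) (use n finI a0 T in \<open>auto intro: divide_nonneg_nonneg\<close>)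
      finally show "1 \<le> (\<Sum>n\<in>I x. a n / T powr s)" .
    qed
    also have "\<dots> \<le> (\<Sum>x\<in>R. \<Sum>n\<in>I x. a n / T powr s)"
      by (intro sum_mono2 finR) (auto simp: B1_def intro!: sum_nonneg divide_nonneg_nonneg a0)
    also have "\<dots> = W / T powr s" by (simp add: W_def sum_divide_distrib)
    finally show ?thesis .
  qed
  have cB2: "real (card B2) \<le> W * T powr (1 - s) / c"
  proof -
    have "real (card B2) = (\<Sum>x\<in>B2. 1)" by simp
    also have "\<dots> \<le> (\<Sum>x\<in>B2. S' x / c)"
    proof (intro sum_mono)
      fix x assume "x \<in> B2"
      hence "S' x > c" by (simp add: B2_def)
      thus "1 \<le> S' x / c" using c0 by simp
    qed
    also have "\<dots> \<le> (\<Sum>x\<in>B2. (\<Sum>n\<in>I x. a n * T powr (1 - s)) / c)"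
    proof (intro sum_mono divide_right_mono)
      fix x assume x: "x \<in> B2"
      hence xR: "x \<in> R" by (simp add: B2_def)
      show "S' x \<le> (\<Sum>n\<in>I x. a n * T powr (1 - s))" unfolding S'_def
      proof (intro sum_mono)
        fix n assume "n \<in> I x"
        hence "n \<ge> 1" using inI[OF xR] by blast
        hence "n > 0" by simp
        thus "(if A n < T then d n else 0) \<le> a n * T powr (1 - s)"
          unfolding A_def d_def a_def using pw2[OF k1 _ T] s0 s1 by simp
      qed
    qed (use c0 in simp)
    also have "\<dots> \<le> (\<Sum>x\<in>R. (\<Sum>n\<in>I x. a n * T powr (1 - s)) / c)"
      by (intro sum_mono2 finR) (auto simp: B2_def c0 less_imp_le[OF c0] intro!: sum_nonneg divide_nonneg_nonneg mult_nonneg_nonneg a0)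
    also have "\<dots> = W * T powr (1 - s) / c"
      by (simp add: W_def sum_divide_distrib sum_distrib_right)
    finally show ?thesis .
  qed
  have "real (card Bad) \<le> real (card (B1 \<union> B2))"
    using sub finB1 finB2 by (simp add: card_mono)
  also have "\<dots> \<le> real (card B1) + real (card B2)"
    using card_Un_le[of B1 B2] by linarith
  also have "\<dots> \<le> W / T powr s + W * T powr (1 - s) / c" using cB1 cB2 by linarith
  also have "\<dots> \<le> (H * SA) / T powr s + (H * SA) * T powr (1 - s) / c"
    using W T c0 by (intro add_mono divide_right_mono mult_right_mono) auto
  also have "\<dots> = (H / T powr s + T powr (1 - s) / (\<eta> * L ^ (k - 1))) * SA"
    using H1 c0 eta L0 by (simp add: c_def field_simps)
  finally show ?thesis by (simp add: Bad_def SA_def a_def N3_def L_def)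
qed


lemma ln_powr_neg_tendsto: "(\<gamma>::real) > 0 \<Longrightarrow> ((\<lambda>X. ln X powr (-\<gamma>)) \<longlongrightarrow> 0) at_top"
  by real_asymp

lemma ev_ln_ge1: "eventually (\<lambda>X::real. 1 \<le> ln X) at_top" by real_asymp

lemma ev_ln_powr: "eventually (\<lambda>X::real. ln X powr c \<le> X) at_top" by real_asymp

lemma ev_ln3: "eventually (\<lambda>X::real. ln (3 * X) \<le> 2 * ln X) at_top" by real_asymp

theorem theorem1p2:
  fixes k :: nat and \<epsilon> :: real and h :: "real \<Rightarrow> real"
  assumes "k \<ge> 2" and "\<epsilon> > 0"
    and "\<forall>\<^sub>F X in at_top. 1 \<le> h X \<and> h X \<le> ln X powr (real k * ln (real k) - real k + 1 - \<epsilon>)"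
  shows "\<forall>\<eta>>0. \<forall>\<^sub>F X in at_top.
    real (card {x :: nat. X \<le> real x \<and> real x \<le> 2 * X \<and>
       (\<Sum>n\<in>{n :: nat. x < n \<and> real n \<le> real x + h X}. real (divisor_k k n))
         > \<eta> * h X * ln (real x) ^ (k - 1)}) \<le> \<eta> * X"
proof (intro allI impI)
  fix \<eta> :: real assume eta: "\<eta> > 0"
  have k: "k \<ge> 2" using assms(1) .
  define e where "e = min \<epsilon> 1"
  have e0: "e > 0" and e1: "e \<le> 1" and ee: "e \<le> \<epsilon>" using assms(2) by (auto simp: e_def)
  define \<delta> where "\<delta> = e / (2 * real k * ln (real k) ^ 2 + 2)"
  define s where "s = 1 - \<delta>"
  define K where "K = real k powr s"
  define \<tau> where "\<tau> = real k * ln (real k) - e / 2"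
  define Q where "Q = real k * ln (real k) - real k + 1"
  note ex = exponents[OF k e0 e1, folded \<delta>_def, folded s_def, folded K_def, folded \<tau>_def]
  define \<gamma>1 where "\<gamma>1 = - ((Q - e) - s * \<tau> + K - 1)"
  define \<gamma>2 where "\<gamma>2 = - ((1 - s) * \<tau> + K - real k)"
  have g1: "\<gamma>1 > 0" using ex(2) by (simp add: \<gamma>1_def Q_def)
  have g2: "\<gamma>2 > 0" using ex(1) by (simp add: \<gamma>2_def)
  have s0: "0 < s" and s1: "s < 1" and K1: "K \<ge> 1" using ex(3-5) by auto
  have k1: "k \<ge> 1" using k by simp
  define C4 where "C4 = (C3 k s + 1) * exp (K * M2c + Ek k)"
  have C4: "C4 \<ge> 0" using C3_nonneg[OF k1 s0 less_imp_le[OF s1]] by (simp add: C4_def)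
  define C5 where "C5 = C4 * 3 * 2 powr (K - 1)"
  have C5: "C5 \<ge> 0" using C4 by (simp add: C5_def)
  have lim: "((\<lambda>X. C5 * (ln X powr (-\<gamma>1) + ln X powr (-\<gamma>2) / \<eta>)) \<longlongrightarrow> C5 * (0 + 0 / \<eta>)) at_top"
    by (intro tendsto_intros ln_powr_neg_tendsto g1 g2) (use eta in simp)
  hence ev_lim: "eventually (\<lambda>X. C5 * (ln X powr (-\<gamma>1) + ln X powr (-\<gamma>2) / \<eta>) < \<eta>) at_top"
    using eta by (intro order_tendstoD(2)) auto
  have ev: "eventually (\<lambda>X. (1 \<le> h X \<and> h X \<le> ln X powr (Q - \<epsilon>)) \<and> X \<ge> 3 \<and> 1 \<le> ln X \<and>
      ln X powr (Q - e) \<le> X \<and> ln (3 * X) \<le> 2 * ln X \<and>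
      C5 * (ln X powr (-\<gamma>1) + ln X powr (-\<gamma>2) / \<eta>) < \<eta>) at_top"
  proof -
    have a3: "eventually (\<lambda>X. 1 \<le> h X \<and> h X \<le> ln X powr (Q - \<epsilon>)) at_top"
      using assms(3) by (simp add: Q_def)
    show ?thesis
      by (rule eventually_conj[OF a3 eventually_conj[OF eventually_ge_at_top[of 3]
           eventually_conj[OF ev_ln_ge1 eventually_conj[OF ev_ln_powr[of "Q - e"] eventually_conj[OF ev_ln3 ev_lim]]]]])
  qed
  show "\<forall>\<^sub>F X in at_top.
    real (card {x :: nat. X \<le> real x \<and> real x \<le> 2 * X \<and>
       (\<Sum>n\<in>{n :: nat. x < n \<and> real n \<le> real x + h X}. real (divisor_k k n))
         > \<eta> * h X * ln (real x) ^ (k - 1)}) \<le> \<eta> * X"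
  proof (rule eventually_mono[OF ev])
    fix X :: real
    assume A: "(1 \<le> h X \<and> h X \<le> ln X powr (Q - \<epsilon>)) \<and> X \<ge> 3 \<and> 1 \<le> ln X \<and>
      ln X powr (Q - e) \<le> X \<and> ln (3 * X) \<le> 2 * ln X \<and>
      C5 * (ln X powr (-\<gamma>1) + ln X powr (-\<gamma>2) / \<eta>) < \<eta>"
    define H where "H = h X"
    define L where "L = ln X"
    have X3: "X \<ge> 3" and L1: "L \<ge> 1" and H1: "1 \<le> H" using A by (auto simp: L_def H_def)
    have L0: "L > 0" using L1 by simp
    have HL: "H \<le> L powr (Q - e)"
    proof -
      have "H \<le> L powr (Q - \<epsilon>)" using A by (simp add: H_def L_def)
      also have "\<dots> \<le> L powr (Q - e)" using L1 ee by (intro powr_mono) auto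
      finally show ?thesis .
    qed
    have HX: "H \<le> X" using HL A by (simp add: L_def)
    define T where "T = L powr \<tau>"
    have T0: "T > 0" using L0 by (simp add: T_def)
    define N3 where "N3 = nat \<lfloor>3 * X\<rfloor>"
    have N3r: "real N3 \<le> 3 * X" unfolding N3_def using X3 by linarith
    have N3ge: "N3 \<ge> 2" unfolding N3_def using X3 by linarith
    have cnt: "real (card {x :: nat. X \<le> real x \<and> real x \<le> 2 * X \<and>
       (\<Sum>n\<in>{n :: nat. x < n \<and> real n \<le> real x + H}. real (divisor_k k n))
         > \<eta> * H * ln (real x) ^ (k - 1)})
       \<le> (H / T powr s + T powr (1 - s) / (\<eta> * L ^ (k - 1))) * (\<Sum>n\<in>{1..N3}. F (wt k s) n)"
      unfolding N3_def L_def by (rule main_count[OF k s0 s1 T0 X3 H1 HX eta])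
    have SA: "(\<Sum>n\<in>{1..N3}. F (wt k s) n) \<le> C5 * X * L powr (K - 1)"
    proof -
      have "(\<Sum>n\<in>{1..N3}. F (wt k s) n) \<le> C4 * real N3 * ln (real N3) powr (K - 1)"
        using M_bound[OF k1 s0 less_imp_le[OF s1] N3ge] by (simp add: C4_def K_def)
      also have "\<dots> \<le> C4 * (3 * X) * (2 * L) powr (K - 1)"
      proof (intro mult_mono powr_mono2)
        have "ln (real N3) \<le> ln (3 * X)" using N3r N3ge by (intro ln_mono) auto
        also have "\<dots> \<le> 2 * L" using A by (simp add: L_def)
        finally show "ln (real N3) \<le> 2 * L" .
        show "0 \<le> ln (real N3)" using N3ge by simp
      qed (use K1 C4 N3r X3 L0 in auto)
      also have "\<dots> = C5 * X * L powr (K - 1)"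
        using L0 by (simp add: C5_def powr_mult)
      finally show ?thesis .
    qed
    have fac0: "H / T powr s + T powr (1 - s) / (\<eta> * L ^ (k - 1)) \<ge> 0"
      using H1 T0 eta L0 by (intro add_nonneg_nonneg divide_nonneg_nonneg) auto
    have key: "(H / T powr s + T powr (1 - s) / (\<eta> * L ^ (k - 1))) * L powr (K - 1)
        \<le> L powr (-\<gamma>1) + L powr (-\<gamma>2) / \<eta>"
    proof -
      have Ts: "T powr s = L powr (\<tau> * s)" by (simp add: T_def powr_powr)
      have Ts1: "T powr (1 - s) = L powr (\<tau> * (1 - s))" by (simp add: T_def powr_powr)
      have Lk: "L ^ (k - 1) = L powr (real k - 1)" using L0 k by (simp add: powr_realpow[symmetric] of_nat_diff)
      have "H / T powr s * L powr (K - 1) \<le> L powr (Q - e) / L powr (\<tau> * s) * L powr (K - 1)"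
      proof (rule mult_right_mono)
        show "H / T powr s \<le> L powr (Q - e) / L powr (\<tau> * s)"
          unfolding Ts by (rule divide_right_mono[OF HL]) simp
      qed simp
      also have "\<dots> = L powr (-\<gamma>1)"
        using L0 by (simp add: powr_diff[symmetric] powr_add[symmetric] \<gamma>1_def algebra_simps)
      finally have P1: "H / T powr s * L powr (K - 1) \<le> L powr (-\<gamma>1)" .
      have "T powr (1 - s) / (\<eta> * L ^ (k - 1)) * L powr (K - 1)
          = (L powr (\<tau> * (1 - s)) / L powr (real k - 1) * L powr (K - 1)) / \<eta>"
        unfolding Ts1 Lk by (simp add: field_simps)
      also have "L powr (\<tau> * (1 - s)) / L powr (real k - 1) * L powr (K - 1) = L powr (-\<gamma>2)"
        using L0 by (simp add: powr_diff[symmetric] powr_add[symmetric] \<gamma>2_def algebra_simps)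
      finally have P2: "T powr (1 - s) / (\<eta> * L ^ (k - 1)) * L powr (K - 1) = L powr (-\<gamma>2) / \<eta>" .
      show ?thesis using P1 P2 by (simp add: distrib_right)
    qed
    have "real (card {x :: nat. X \<le> real x \<and> real x \<le> 2 * X \<and>
       (\<Sum>n\<in>{n :: nat. x < n \<and> real n \<le> real x + H}. real (divisor_k k n))
         > \<eta> * H * ln (real x) ^ (k - 1)})
       \<le> (H / T powr s + T powr (1 - s) / (\<eta> * L ^ (k - 1))) * (C5 * X * L powr (K - 1))"
      using cnt SA fac0 by (meson mult_left_mono order_trans)
    also have "\<dots> = C5 * X * ((H / T powr s + T powr (1 - s) / (\<eta> * L ^ (k - 1))) * L powr (K - 1))"
      by (simp add: algebra_simps)
    also have "\<dots> \<le> C5 * X * (L powr (-\<gamma>1) + L powr (-\<gamma>2) / \<eta>)"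
      using key C5 X3 by (intro mult_left_mono) auto
    also have "\<dots> = X * (C5 * (L powr (-\<gamma>1) + L powr (-\<gamma>2) / \<eta>))" by (simp add: algebra_simps)
    also have "\<dots> \<le> X * \<eta>" using A X3 by (intro mult_left_mono) (auto simp: L_def)
    finally show "real (card {x :: nat. X \<le> real x \<and> real x \<le> 2 * X \<and>
       (\<Sum>n\<in>{n :: nat. x < n \<and> real n \<le> real x + h X}. real (divisor_k k n))
         > \<eta> * h X * ln (real x) ^ (k - 1)}) \<le> \<eta> * X" by (simp add: H_def mult.commute)
  qed
qed

end
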